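(* Let $k\subset K$ be a finite totally ramified Galois extension of complete discrete valuation fields with Galois group $G$, degree $n$ and ramification depth $d$, and let $i\in\mathbb Z$. (5) For every $\alpha\in X_i$ one has $\alpha\cdot(1\otimes\pi^{-i})\in X_0$ and $r_X\big(\alpha\cdot(1\otimes\pi^{-i})\big)=p_{d+i}(\phi(\alpha))$. (6) For every $\alpha\in K\otimes_kK$, if $\phi(\alpha)=\sum_{\sigma\in G}a_\sigma\sigma$ then $\phi(t(\alpha))=\sum_{\sigma\in G}\sigma(a_{\sigma^{-1}})\sigma$.
   Context: Notation: $O_K$, $\mathfrak m$ the ring of integers of $K$ and its maximal ideal, $O_k$ that of $k$, $\bar k$ the residue field, $r:O_K\to\bar k$ reduction, $v$ the valuation of $K$ with $v(K^* )=\mathbb Z$, $\pi$ a fixed uniformizer of $K$, $d=v(\mathfrak D_{K/k})-n+1$ ($\mathfrak D_{K/k}$ the different), $c_\pi=\mathrm{Tr}_{K/k}(\pi^{-d})\in O_k^*$. Tensor products are over $k$; for $O_k$-submodules $A,B\subset K$, $A\otimes B$ is the $O_k$-submodule of $K\otimes_kK$ generated by $a\otimes b$. $X_i=\sum_{j\in\mathbb Z}\mathfrak m^j\otimes\mathfrak m^{i-j}$; $X_0$ is a ring and $r_X:X_0/X_1\to R=\bar k[X]/(X^n-1)$ is the unique unital $\bar k$-algebra isomorphism sending the class of $\pi\otimes\pi^{-1}$ to $X$ (we also write $r_X(\beta)$ for $\beta\in X_0$). $t$ is the swap $x\otimes y\mapsto y\otimes x$. $\phi:K\otimes_kK\to K[G]$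 is the $k$-linear bijection with $\phi(x\otimes y)=x\sum_{\sigma\in G}\sigma(y)\sigma$; it is known that $\phi(X_i)=\mathfrak C_{i+d}$, where $\mathfrak C_l=\{f\in K[G]: v(f(x))-v(x)\ge l\ \forall x\in K^*\}$ and $f=\sum a_\sigma\sigma$ acts by $f(x)=\sum a_\sigma\sigma(x)$. For $f\in\mathfrak C_l$, $p_l(f)=r(c_\pi)^{-1}\sum_{j=0}^{n-1}r\big(f(\pi^{j-l})/\pi^j\big)X^j\in R$. *)

theory Defs
  imports "HOL-Computational_Algebra.Polynomial"
begin

text \<open>The big field K is the whole type 'a; the subfield k is a set.
 A valuation v : K^* -> Z is a function 'a => int (its value at 0 is irrelevant).\<close>

definition mpow :: "('a::field \<Rightarrow> int) \<Rightarrow> int \<Rightarrow> 'a set" where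
  "mpow v j = {x. x = 0 \<or> j \<le> v x}"   (* m^j ; O_K = mpow v 0 *)

definition discrete_val :: "('a::field \<Rightarrow> int) \<Rightarrow> bool" where
  "discrete_val v \<longleftrightarrow>
     (\<forall>x y. x \<noteq> 0 \<longrightarrow> y \<noteq> 0 \<longrightarrow> v (x * y) = v x + v y) \<and>
     (\<forall>x y. x \<noteq> 0 \<longrightarrow> y \<noteq> 0 \<longrightarrow> x + y \<noteq> 0 \<longrightarrow> min (v x) (v y) \<le> v (x + y)) \<and>
     v ` (UNIV - {0}) = UNIV"

definition v_complete :: "('a::field \<Rightarrow> int) \<Rightarrow> 'a set \<Rightarrow> bool" where
  "v_complete v S \<longleftrightarrow>
     (\<forall>s::nat \<Rightarrow> 'a. (\<forall>p. s p \<in> S) \<longrightarrow>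
        (\<forall>N. \<exists>M. \<forall>p q. M \<le> p \<longrightarrow> M \<le> q \<longrightarrow> s p - s q \<in> mpow v N) \<longrightarrow>
        (\<exists>L\<in>S. \<forall>N. \<exists>M. \<forall>p. M \<le> p \<longrightarrow> s p - L \<in> mpow v N))"

definition is_subfield :: "'a::field set \<Rightarrow> bool" where
  "is_subfield k \<longleftrightarrow> 0 \<in> k \<and> 1 \<in> k \<and>
     (\<forall>x\<in>k. \<forall>y\<in>k. x + y \<in> k \<and> x * y \<in> k) \<and> (\<forall>x\<in>k. - x \<in> k \<and> inverse x \<in> k)"

definition Gal :: "'a::field set \<Rightarrow> ('a \<Rightarrow> 'a) set" where
  "Gal k = {\<sigma>. bij \<sigma> \<and> (\<forall>x y. \<sigma> (x + y) = \<sigma> x + \<sigma> y \<and> \<sigma> (x * y) = \<sigma> x * \<sigma> y)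
              \<and> \<sigma> 1 = 1 \<and> (\<forall>c\<in>k. \<sigma> c = c)}"

definition finite_galois :: "'a::field set \<Rightarrow> bool" where
  "finite_galois k \<longleftrightarrow> finite (Gal k) \<and> {x. \<forall>\<sigma>\<in>Gal k. \<sigma> x = x} = k"

definition Tr :: "'a::field set \<Rightarrow> 'a \<Rightarrow> 'a" where
  "Tr k x = (\<Sum>\<sigma>\<in>Gal k. \<sigma> x)"

text \<open>v(D_{K/k}): the codifferent {x. Tr(x O_K) \<subseteq> O_k} equals m^{-v(D)}.\<close>
definition different_val :: "'a::field set \<Rightarrow> ('a \<Rightarrow> int) \<Rightarrow> int" where
  "different_val k v = (THE \<delta>. {x. \<forall>y\<in>mpow v 0. Tr k (x * y) \<in> k \<inter> mpow v 0} = mpow v (- \<delta>))"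

definition depth :: "'a::field set \<Rightarrow> ('a \<Rightarrow> int) \<Rightarrow> int" where
  "depth k v = different_val k v - int (card (Gal k)) + 1"

definition c_pi :: "'a::field set \<Rightarrow> ('a \<Rightarrow> int) \<Rightarrow> 'a \<Rightarrow> 'a" where
  "c_pi k v \<pi> = Tr k (\<pi> powi (- depth k v))"

text \<open>Residue field: an abstract field 'b with reduction r : O_K -> 'b, a surjective
 ring homomorphism with kernel m.\<close>
definition residue_map :: "('a::field \<Rightarrow> int) \<Rightarrow> ('a \<Rightarrow> 'b::field) \<Rightarrow> bool" where
  "residue_map v r \<longleftrightarrow>
     (\<forall>x\<in>mpow v 0. \<forall>y\<in>mpow v 0. r (x + y) = r x + r y \<and> r (x * y) = r x * r y) \<and>
     r 1 = 1 \<and> r ` mpow v 0 = UNIV \<and> {x \<in> mpow v 0. r x = 0} = mpow v 1"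

text \<open>An element of K \<otimes>_k K is represented by a formal sum \<Sum> a_i \<otimes> b_i, i.e. a list of
 pairs. Two formal sums represent the same tensor iff they agree under every pair of
 k-linear functionals K -> k (this characterises equality in K \<otimes>_k K over a field).\<close>

definition klin :: "'a::field set \<Rightarrow> ('a \<Rightarrow> 'a) \<Rightarrow> bool" where
  "klin k f \<longleftrightarrow> (\<forall>x. f x \<in> k) \<and> (\<forall>x y. f (x + y) = f x + f y) \<and> (\<forall>c\<in>k. \<forall>x. f (c * x) = c * f x)"

definition teq :: "'a::field set \<Rightarrow> ('a \<times> 'a) list \<Rightarrow> ('a \<times> 'a) list \<Rightarrow> bool" where
  "teq k xs ys \<longleftrightarrow> (\<forall>f g. klin k f \<longrightarrow> klin k g \<longrightarrow>
      (\<Sum>(a, b)\<leftarrow>xs. f a * g b) = (\<Sum>(a, b)\<leftarrow>ys. f a * g b))"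

definition tadd :: "('a \<times> 'a) list \<Rightarrow> ('a \<times> 'a) list \<Rightarrow> ('a \<times> 'a) list" where
  "tadd xs ys = xs @ ys"

definition tneg :: "('a::ring \<times> 'a) list \<Rightarrow> ('a \<times> 'a) list" where
  "tneg xs = map (\<lambda>(a, b). (- a, b)) xs"

definition tscal :: "'a::ring \<Rightarrow> ('a \<times> 'a) list \<Rightarrow> ('a \<times> 'a) list" where
  "tscal c xs = map (\<lambda>(a, b). (c * a, b)) xs"

definition tmul :: "('a::ring \<times> 'a) list \<Rightarrow> ('a \<times> 'a) list \<Rightarrow> ('a \<times> 'a) list" where
  "tmul xs ys = concat (map (\<lambda>(a, b). map (\<lambda>(c, d). (a * c, b * d)) ys) xs)"

definition tswap :: "('a \<times> 'a) list \<Rightarrow> ('a \<times> 'a) list" where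
  "tswap xs = map prod.swap xs"

text \<open>X_i = \<Sum>_j m^j \<otimes> m^{i-j}: tensors representable by sums of a \<otimes> b with v a + v b \<ge> i.\<close>
definition Xmem :: "'a::field set \<Rightarrow> ('a \<Rightarrow> int) \<Rightarrow> int \<Rightarrow> ('a \<times> 'a) list \<Rightarrow> bool" where
  "Xmem k v i xs \<longleftrightarrow> (\<exists>ys. teq k xs ys \<and>
      (\<forall>(a, b)\<in>set ys. \<exists>j. a \<in> mpow v j \<and> b \<in> mpow v (i - j)))"

text \<open>An element \<Sum> a_\<sigma> \<sigma> of K[G] is the coefficient function \<sigma> \<mapsto> a_\<sigma> (only values on G matter).\<close>
definition phi :: "('a::field \<times> 'a) list \<Rightarrow> ('a \<Rightarrow> 'a) \<Rightarrow> 'a" where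
  "phi xs = (\<lambda>\<sigma>. (\<Sum>(a, b)\<leftarrow>xs. a * \<sigma> b))"

definition act :: "'a::field set \<Rightarrow> (('a \<Rightarrow> 'a) \<Rightarrow> 'a) \<Rightarrow> 'a \<Rightarrow> 'a" where
  "act k f x = (\<Sum>\<sigma>\<in>Gal k. f \<sigma> * \<sigma> x)"

section \<open>R = kbar[X]/(X^n - 1), elements given by their reduced representatives (degree < n)\<close>

definition Xn1 :: "nat \<Rightarrow> 'b::field poly" where
  "Xn1 n = monom 1 n - 1"

definition p_map :: "'a::field set \<Rightarrow> ('a \<Rightarrow> int) \<Rightarrow> 'a \<Rightarrow> ('a \<Rightarrow> 'b::field) \<Rightarrow> int
                      \<Rightarrow> (('a \<Rightarrow> 'a) \<Rightarrow> 'a) \<Rightarrow> 'b poly" where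
  "p_map k v \<pi> r l f = smult (inverse (r (c_pi k v \<pi>)))
      (\<Sum>j<card (Gal k). monom (r (act k f (\<pi> powi (int j - l)) / \<pi> ^ j)) j)"

text \<open>r_X : X_0/X_1 -> R, the unital kbar-algebra isomorphism with class(\<pi>\<otimes>\<pi>^{-1}) \<mapsto> X,
 given as a map on representatives in X_0 (values = reduced polynomials).\<close>
definition is_rX :: "'a::field set \<Rightarrow> ('a \<Rightarrow> int) \<Rightarrow> 'a \<Rightarrow> ('a \<Rightarrow> 'b::field)
                      \<Rightarrow> (('a \<times> 'a) list \<Rightarrow> 'b poly) \<Rightarrow> bool" where
  "is_rX k v \<pi> r \<rho> \<longleftrightarrow>
     (let n = card (Gal k); X0 = {xs. Xmem k v 0 xs} in
       (\<forall>xs\<in>X0. degree (\<rho> xs) < n) \<and>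
       (\<forall>xs\<in>X0. \<forall>ys\<in>X0. \<rho> xs = \<rho> ys \<longleftrightarrow> Xmem k v 1 (tadd xs (tneg ys))) \<and>
       (\<forall>p. degree p < n \<longrightarrow> (\<exists>xs\<in>X0. \<rho> xs = p)) \<and>
       (\<forall>xs\<in>X0. \<forall>ys\<in>X0. \<rho> (tadd xs ys) = \<rho> xs + \<rho> ys) \<and>
       (\<forall>xs\<in>X0. \<forall>ys\<in>X0. \<rho> (tmul xs ys) = (\<rho> xs * \<rho> ys) mod Xn1 n) \<and>
       (\<forall>c\<in>k \<inter> mpow v 0. \<forall>xs\<in>X0. \<rho> (tscal c xs) = smult (r c) (\<rho> xs)) \<and>
       \<rho> [(1, 1)] = 1 \<and>
       \<rho> [(\<pi>, inverse \<pi>)] = [:0, 1:] mod Xn1 n)"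

end

theory Submission
  imports Defs
begin


section \<open>Valuation basics\<close>

locale dval =
  fixes v :: "'a::field \<Rightarrow> int"
  assumes dv: "discrete_val v"
begin

lemma v_mult: "x \<noteq> 0 \<Longrightarrow> y \<noteq> 0 \<Longrightarrow> v (x * y) = v x + v y"
  using dv unfolding discrete_val_def by blast

lemma v_add: "x \<noteq> 0 \<Longrightarrow> y \<noteq> 0 \<Longrightarrow> x + y \<noteq> 0 \<Longrightarrow> min (v x) (v y) \<le> v (x + y)"
  using dv unfolding discrete_val_def by blast

lemma v_surj: "\<exists>x. x \<noteq> 0 \<and> v x = m"
proof -
  have "m \<in> v ` (UNIV - {0})" using dv unfolding discrete_val_def by auto
  then show ?thesis by auto
qed

lemma v_one[simp]: "v 1 = 0"
  using v_mult[of 1 1] by simp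

lemma v_inverse: "x \<noteq> 0 \<Longrightarrow> v (inverse x) = - v x"
  using v_mult[of x "inverse x"] by simp

lemma v_divide: "x \<noteq> 0 \<Longrightarrow> y \<noteq> 0 \<Longrightarrow> v (x / y) = v x - v y"
  by (simp add: divide_inverse v_mult v_inverse)

lemma v_minus[simp]: "v (- x) = v x"
proof (cases "x = 0")
  case True then show ?thesis by simp
next
  case False
  have "v ((-x) * (-x)) = v (x * x)" by simp
  then show ?thesis using False v_mult[of "-x" "-x"] v_mult[of x x] by simp
qed

lemma v_power: "x \<noteq> 0 \<Longrightarrow> v (x ^ m) = int m * v x"
  by (induction m) (auto simp: v_mult algebra_simps)

lemma v_powi: "x \<noteq> 0 \<Longrightarrow> v (x powi m) = m * v x"
  by (cases "m \<ge> 0") (auto simp: power_int_def v_power v_inverse)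

lemma v_add_ge: "x + y \<noteq> 0 \<Longrightarrow> (x = 0 \<or> B \<le> v x) \<Longrightarrow> (y = 0 \<or> B \<le> v y) \<Longrightarrow> B \<le> v (x + y)"
  using v_add[of x y] by (cases "x = 0"; cases "y = 0") (auto simp: min_def split: if_splits)

lemma v_diff: "x \<noteq> 0 \<Longrightarrow> y \<noteq> 0 \<Longrightarrow> x - y \<noteq> 0 \<Longrightarrow> min (v x) (v y) \<le> v (x - y)"
  using v_add[of x "-y"] by simp

lemma v_add_strict: assumes "x \<noteq> 0" "y = 0 \<or> v x < v y" shows "x + y \<noteq> 0 \<and> v (x + y) = v x"
proof (cases "y = 0")
  case True then show ?thesis using assms by simp
next
  case False
  with assms have lt: "v x < v y" by simp
  have ne: "x + y \<noteq> 0"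
  proof
    assume "x + y = 0" then have "y = - x" by (simp add: add_eq_0_iff)
    then show False using lt by simp
  qed
  have "min (v x) (v y) \<le> v (x + y)" using v_add[OF assms(1) False ne] .
  moreover have "min (v (x+y)) (v (-y)) \<le> v x"
    using v_add[of "x+y" "-y"] ne False assms(1) by simp
  ultimately show ?thesis using lt ne by auto
qed

definition vge :: "int \<Rightarrow> 'a \<Rightarrow> bool" where "vge B x \<longleftrightarrow> x = 0 \<or> B \<le> v x"

lemma vge_mpow: "vge B x \<longleftrightarrow> x \<in> mpow v B"
  by (simp add: vge_def mpow_def)

lemma mpow_add: "x \<in> mpow v B \<Longrightarrow> y \<in> mpow v B \<Longrightarrow> x + y \<in> mpow v B"
  unfolding mpow_def using v_add_ge by auto

lemma mpow_minus: "x \<in> mpow v B \<Longrightarrow> - x \<in> mpow v B"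
  unfolding mpow_def by auto

lemma mpow_diff: "x \<in> mpow v B \<Longrightarrow> y \<in> mpow v B \<Longrightarrow> x - y \<in> mpow v B"
  using mpow_add[of x B "-y"] mpow_minus by auto

lemma mpow_zero[simp]: "0 \<in> mpow v B" by (simp add: mpow_def)

lemma mpow_mult: "x \<in> mpow v A \<Longrightarrow> y \<in> mpow v B \<Longrightarrow> x * y \<in> mpow v (A + B)"
  unfolding mpow_def by (cases "x = 0"; cases "y = 0") (auto simp: v_mult)

lemma mpow_mono: "x \<in> mpow v A \<Longrightarrow> B \<le> A \<Longrightarrow> x \<in> mpow v B"
  unfolding mpow_def by auto

lemma mpow_iff: "x \<noteq> 0 \<Longrightarrow> x \<in> mpow v A \<longleftrightarrow> A \<le> v x"
  unfolding mpow_def by auto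

lemma mpow_self: "x \<in> mpow v (v x)"
  unfolding mpow_def by auto

lemma one_mpow0[simp]: "1 \<in> mpow v 0" by (simp add: mpow_def)

lemma mpow_sum: "finite I \<Longrightarrow> (\<And>i. i \<in> I \<Longrightarrow> f i \<in> mpow v B) \<Longrightarrow> sum f I \<in> mpow v B"
  by (induction I rule: finite_induct) (auto intro: mpow_add)

lemma mpow_sum_list: "(\<And>x. x \<in> set xs \<Longrightarrow> f x \<in> mpow v B) \<Longrightarrow> (\<Sum>x\<leftarrow>xs. f x) \<in> mpow v B"
  by (induction xs) (auto intro: mpow_add)

lemma mpow_eq_iff: "mpow v A = mpow v B \<longleftrightarrow> A = B"
proof
  assume eq: "mpow v A = mpow v B"
  obtain x where x: "x \<noteq> 0" "v x = A" using v_surj by blast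
  obtain y where y: "y \<noteq> 0" "v y = B" using v_surj by blast
  have "x \<in> mpow v B" using eq x mpow_self by metis
  moreover have "y \<in> mpow v A" using eq y mpow_self by metis
  ultimately show "A = B" using x y by (auto simp: mpow_def)
qed simp

lemma sum_vgt: "finite I \<Longrightarrow> (\<And>i. i \<in> I \<Longrightarrow> t i = 0 \<or> B < v (t i)) \<Longrightarrow> sum t I = 0 \<or> B < v (sum t I)"
proof (induction I rule: finite_induct)
  case (insert a F)
  then have h1: "sum t F = 0 \<or> B < v (sum t F)" by auto
  have h2: "t a = 0 \<or> B < v (t a)" using insert by auto
  have e: "sum t (insert a F) = t a + sum t F" using insert by simp
  show ?case unfolding e using h1 h2 v_add_ge[of "t a" "sum t F" "B+1"]
    by (cases "t a + sum t F = 0") auto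
qed simp

lemma sum_unique_min:
  assumes "finite I" "p \<in> I" "t p \<noteq> 0" "\<And>i. i \<in> I \<Longrightarrow> i \<noteq> p \<Longrightarrow> t i = 0 \<or> v (t p) < v (t i)"
  shows "sum t I \<noteq> 0 \<and> v (sum t I) = v (t p)"
proof -
  have "sum t I = t p + sum t (I - {p})" using assms by (simp add: sum.remove)
  moreover have "sum t (I - {p}) = 0 \<or> v (t p) < v (sum t (I - {p}))"
    using assms by (intro sum_vgt) auto
  ultimately show ?thesis using v_add_strict[OF assms(3)] by auto
qed

lemma sum_distinct_vals:
  assumes "finite I" "\<exists>i\<in>I. t i \<noteq> 0"
    and "\<And>i j. i \<in> I \<Longrightarrow> j \<in> I \<Longrightarrow> t i \<noteq> 0 \<Longrightarrow> t j \<noteq> 0 \<Longrightarrow> v (t i) = v (t j) \<Longrightarrow> i = j"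
  shows "sum t I \<noteq> 0 \<and> (\<exists>p\<in>I. t p \<noteq> 0 \<and> v (sum t I) = v (t p) \<and> (\<forall>i\<in>I. t i \<noteq> 0 \<longrightarrow> v (t p) \<le> v (t i)))"
proof -
  let ?J = "{i\<in>I. t i \<noteq> 0}"
  have fin: "finite ?J" "?J \<noteq> {}" using assms by auto
  define m where "m = Min ((\<lambda>i. v (t i)) ` ?J)"
  have "m \<in> (\<lambda>i. v (t i)) ` ?J" unfolding m_def using fin by (intro Min_in) auto
  then obtain p where p1: "p \<in> ?J" "v (t p) = m" by auto
  have p2: "\<forall>i\<in>?J. v (t p) \<le> v (t i)" unfolding p1 m_def using fin by auto
  note p = p1(1) p2
  have "sum t I \<noteq> 0 \<and> v (sum t I) = v (t p)"
  proof (rule sum_unique_min[OF assms(1)])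
    show "p \<in> I" "t p \<noteq> 0" using p by auto
    fix i assume i: "i \<in> I" "i \<noteq> p"
    show "t i = 0 \<or> v (t p) < v (t i)"
    proof (cases "t i = 0")
      case False
      then have "v (t p) \<le> v (t i)" using p i by auto
      moreover have "v (t p) \<noteq> v (t i)" using assms(3)[of p i] p i False by auto
      ultimately show ?thesis by simp
    qed simp
  qed
  then show ?thesis using p by auto
qed

end



lemma Gal_add: "\<sigma> \<in> Gal k \<Longrightarrow> \<sigma> (x + y) = \<sigma> x + \<sigma> y" by (simp add: Gal_def)
lemma Gal_mult: "\<sigma> \<in> Gal k \<Longrightarrow> \<sigma> (x * y) = \<sigma> x * \<sigma> y" by (simp add: Gal_def)
lemma Gal_one: "\<sigma> \<in> Gal k \<Longrightarrow> \<sigma> 1 = 1" by (simp add: Gal_def)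
lemma Gal_fix: "\<sigma> \<in> Gal k \<Longrightarrow> c \<in> k \<Longrightarrow> \<sigma> c = c" by (simp add: Gal_def)
lemma Gal_bij: "\<sigma> \<in> Gal k \<Longrightarrow> bij \<sigma>" by (simp add: Gal_def)
lemma Gal_inj: "\<sigma> \<in> Gal k \<Longrightarrow> inj \<sigma>" by (simp add: Gal_def bij_is_inj)
lemma Gal_zero: "\<sigma> \<in> Gal k \<Longrightarrow> \<sigma> 0 = (0::'a::field)"
  using Gal_add[of \<sigma> k 0 0] by (metis add.right_neutral add_left_cancel)
lemma Gal_minus: "\<sigma> \<in> Gal k \<Longrightarrow> \<sigma> (- x) = - \<sigma> (x::'a::field)"
  using Gal_add[of \<sigma> k x "-x"] Gal_zero[of \<sigma> k] by (simp add: add_eq_0_iff)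
lemma Gal_diff: "\<sigma> \<in> Gal k \<Longrightarrow> \<sigma> (x - y) = \<sigma> x - \<sigma> (y::'a::field)"
  using Gal_add[of \<sigma> k x "-y"] Gal_minus[of \<sigma> k y] by simp
lemma Gal_eq0: "\<sigma> \<in> Gal k \<Longrightarrow> \<sigma> x = 0 \<longleftrightarrow> x = (0::'a::field)"
  using Gal_inj[of \<sigma> k] Gal_zero[of \<sigma> k] by (metis injD)
lemma Gal_inverse: assumes s: "\<sigma> \<in> Gal k" shows "\<sigma> (inverse x) = inverse (\<sigma> (x::'a::field))"
proof (cases "x = 0")
  case True then show ?thesis by (simp add: Gal_zero[OF s])
next
  case False
  have "\<sigma> x * \<sigma> (inverse x) = 1" using Gal_mult[OF s, of x "inverse x"] Gal_one[OF s] False by simp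
  then show ?thesis by (simp add: inverse_unique)
qed
lemma Gal_divide: "\<sigma> \<in> Gal k \<Longrightarrow> \<sigma> (x / y) = \<sigma> x / \<sigma> (y::'a::field)"
  by (simp add: divide_inverse Gal_mult Gal_inverse)
lemma Gal_power: "\<sigma> \<in> Gal k \<Longrightarrow> \<sigma> (x ^ m) = \<sigma> (x::'a::field) ^ m"
  by (induction m) (auto simp: Gal_one Gal_mult)
lemma Gal_powi: "\<sigma> \<in> Gal k \<Longrightarrow> \<sigma> (x powi m) = \<sigma> (x::'a::field) powi m"
  by (simp add: power_int_def Gal_power Gal_inverse)
lemma Gal_sum: "\<sigma> \<in> Gal k \<Longrightarrow> \<sigma> (sum f A) = (\<Sum>a\<in>A. \<sigma> (f a :: 'a::field))"
  by (induction A rule: infinite_finite_induct) (auto simp: Gal_zero Gal_add)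
lemma Gal_sum_list: "\<sigma> \<in> Gal k \<Longrightarrow> \<sigma> (\<Sum>x\<leftarrow>xs. f x) = (\<Sum>x\<leftarrow>xs. \<sigma> (f x :: 'a::field))"
  by (induction xs) (auto simp: Gal_zero Gal_add)

lemma Gal_id: "id \<in> Gal k" by (simp add: Gal_def)
lemma Gal_id': "(\<lambda>x. x) \<in> Gal k" using Gal_id by (simp add: id_def)
lemma Gal_comp: "\<sigma> \<in> Gal k \<Longrightarrow> \<tau> \<in> Gal k \<Longrightarrow> \<sigma> \<circ> \<tau> \<in> Gal k"
  by (simp add: Gal_def bij_comp)
lemma Gal_inv_cancel1: "\<sigma> \<in> Gal k \<Longrightarrow> \<sigma> (inv \<sigma> x) = x"
  using Gal_bij by (metis bij_inv_eq_iff)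
lemma Gal_inv_cancel2: "\<sigma> \<in> Gal k \<Longrightarrow> inv \<sigma> (\<sigma> x) = x"
  using Gal_bij by (metis bij_inv_eq_iff)
lemma Gal_inv: assumes s: "\<sigma> \<in> Gal k" shows "inv \<sigma> \<in> Gal k"
proof -
  have b: "bij (inv \<sigma>)" using Gal_bij[OF s] by (simp add: bij_imp_bij_inv)
  have i: "inj \<sigma>" using Gal_inj[OF s] .
  have "inv \<sigma> (x + y) = inv \<sigma> x + inv \<sigma> y" for x y
    by (rule injD[OF i]) (simp add: Gal_add[OF s] Gal_inv_cancel1[OF s])
  moreover have "inv \<sigma> (x * y) = inv \<sigma> x * inv \<sigma> y" for x y
    by (rule injD[OF i]) (simp add: Gal_mult[OF s] Gal_inv_cancel1[OF s])
  moreover have "inv \<sigma> 1 = 1"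
    by (rule injD[OF i]) (simp add: Gal_one[OF s] Gal_inv_cancel1[OF s])
  moreover have "c \<in> k \<Longrightarrow> inv \<sigma> c = c" for c
    by (rule injD[OF i]) (simp add: Gal_fix[OF s] Gal_inv_cancel1[OF s])
  ultimately show ?thesis using b by (simp add: Gal_def)
qed

lemma Gal_reindex: assumes s: "\<sigma> \<in> Gal k" shows "bij_betw (\<lambda>\<tau>. \<sigma> \<circ> \<tau>) (Gal k) (Gal k)"
proof (rule bij_betw_byWitness[where f' = "\<lambda>\<tau>. inv \<sigma> \<circ> \<tau>"])
  show "(\<lambda>\<tau>. \<sigma> \<circ> \<tau>) ` Gal k \<subseteq> Gal k" using Gal_comp[OF s] by auto
  show "(\<lambda>\<tau>. inv \<sigma> \<circ> \<tau>) ` Gal k \<subseteq> Gal k" using Gal_comp[OF Gal_inv[OF s]] by auto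
  show "\<forall>x\<in>Gal k. inv \<sigma> \<circ> (\<sigma> \<circ> x) = x" by (auto simp: Gal_inv_cancel2[OF s])
  show "\<forall>y\<in>Gal k. \<sigma> \<circ> (inv \<sigma> \<circ> y) = y" by (auto simp: Gal_inv_cancel1[OF s])
qed

lemma Gal_sum_reindex: assumes s: "\<sigma> \<in> Gal k"
  shows "(\<Sum>\<tau>\<in>Gal k. h (\<sigma> \<circ> \<tau>)) = (\<Sum>\<tau>\<in>Gal k. h \<tau>)"
  using sum.reindex_bij_betw[OF Gal_reindex[OF s], of h] by simp

lemma subfield_props: assumes "is_subfield k"
  shows "0 \<in> k" "1 \<in> k" "x \<in> k \<Longrightarrow> y \<in> k \<Longrightarrow> x + y \<in> k" "x \<in> k \<Longrightarrow> y \<in> k \<Longrightarrow> x * y \<in> k"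
    "x \<in> k \<Longrightarrow> - x \<in> k" "x \<in> k \<Longrightarrow> inverse x \<in> k"
  using assms unfolding is_subfield_def by auto

lemma subfield_diff: "is_subfield k \<Longrightarrow> x \<in> k \<Longrightarrow> y \<in> k \<Longrightarrow> x - y \<in> k"
  using subfield_props[of k] by (metis diff_conv_add_uminus)
lemma subfield_divide: "is_subfield k \<Longrightarrow> x \<in> k \<Longrightarrow> y \<in> k \<Longrightarrow> x / y \<in> k"
  using subfield_props[of k] by (metis divide_inverse)
lemma subfield_sum: "is_subfield k \<Longrightarrow> (\<And>i. i \<in> A \<Longrightarrow> f i \<in> k) \<Longrightarrow> sum f A \<in> k"
  by (induction A rule: infinite_finite_induct) (auto intro: subfield_props)

locale gsetup = dval v for v :: "'a::field \<Rightarrow> int" +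
  fixes k :: "'a set" and \<pi> :: 'a
  assumes sf: "is_subfield k" and fg: "finite_galois k"
    and vk: "v ` (k - {0}) = range (\<lambda>z. int (card (Gal k)) * z)"
    and vpi: "v \<pi> = 1" and pi0: "\<pi> \<noteq> 0"
begin

abbreviation "G \<equiv> Gal k"
abbreviation "n \<equiv> card (Gal k)"

lemma finG: "finite G" using fg by (simp add: finite_galois_def)
lemma n_pos: "n \<ge> 1"
  using finG Gal_id[of k] by (metis One_nat_def Suc_leI card_gt_0_iff empty_iff)
lemma fixed_in_k: "(\<And>\<sigma>. \<sigma> \<in> G \<Longrightarrow> \<sigma> x = x) \<Longrightarrow> x \<in> k"
  using fg unfolding finite_galois_def by blast

lemmas kp = subfield_props[OF sf] subfield_diff[OF sf] subfield_divide[OF sf] subfield_sum[OF sf]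

lemma vk_val: "c \<in> k \<Longrightarrow> c \<noteq> 0 \<Longrightarrow> \<exists>z. v c = int n * z"
  using vk by blast
lemma vk_ex: "\<exists>c\<in>k. c \<noteq> 0 \<and> v c = int n * z"
proof -
  have "int n * z \<in> v ` (k - {0})" using vk by auto
  then show ?thesis by auto
qed

text \<open>valuations of elements of k are multiples of n\<close>
lemma vk_ge: assumes "c \<in> k" "c \<noteq> 0" "int n * z - int n < v c" shows "int n * z \<le> v c"
proof -
  obtain w where w: "v c = int n * w" using vk_val assms by blast
  have "int n * (z - 1) < int n * w" using assms w by (simp add: algebra_simps)
  then have "z - 1 < w" using n_pos by (simp add: mult_less_cancel_left)
  then have "z \<le> w" by simp
  then show ?thesis using w n_pos by (simp add: mult_left_mono)
qed

lemma vk_pos: assumes "c \<in> k" "c \<noteq> 0" "0 < v c" shows "int n \<le> v c"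
  using vk_ge[OF assms(1,2), of 1] assms(3) by simp

lemma vk_nonneg: assumes "c \<in> k" "c \<noteq> 0" "- int n < v c" shows "0 \<le> v c"
  using vk_ge[OF assms(1,2), of 0] assms(3) by simp

lemma Tr_in_k: "Tr k x \<in> k"
proof (rule fixed_in_k)
  fix \<sigma> assume s: "\<sigma> \<in> G"
  have "\<sigma> (Tr k x) = (\<Sum>\<tau>\<in>G. (\<sigma> \<circ> \<tau>) x)" unfolding Tr_def by (simp add: Gal_sum[OF s])
  also have "\<dots> = Tr k x" unfolding Tr_def using Gal_sum_reindex[OF s, of "\<lambda>\<tau>. \<tau> x"] by simp
  finally show "\<sigma> (Tr k x) = Tr k x" .
qed

lemma Tr_add: "Tr k (x + y) = Tr k x + Tr k y"
  unfolding Tr_def by (simp add: Gal_add sum.distrib)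
lemma Tr_zero[simp]: "Tr k 0 = 0"
  unfolding Tr_def by (simp add: Gal_zero)
lemma Tr_minus: "Tr k (- x) = - Tr k x"
  unfolding Tr_def by (simp add: Gal_minus sum_negf)
lemma Tr_diff: "Tr k (x - y) = Tr k x - Tr k y"
  using Tr_add[of x "-y"] Tr_minus[of y] by simp
lemma Tr_scal: "c \<in> k \<Longrightarrow> Tr k (c * x) = c * Tr k x"
  unfolding Tr_def by (simp add: Gal_mult Gal_fix sum_distrib_left)
lemma Tr_div: "c \<in> k \<Longrightarrow> Tr k (x / c) = Tr k x / c"
  using Tr_scal[of "inverse c" x] kp(6)[of c] by (simp add: divide_inverse mult.commute)

end



lemma dedekind_aux:
  fixes S :: "('a::field \<Rightarrow> 'a) set"
  assumes "finite S" "\<forall>\<chi>\<in>S. \<forall>x y. \<chi> (x * y) = \<chi> x * \<chi> y" "\<forall>\<chi>\<in>S. \<chi> 1 = 1"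
  shows "\<forall>c. (\<forall>x. (\<Sum>\<chi>\<in>S. c \<chi> * \<chi> x) = 0) \<longrightarrow> (\<forall>\<chi>\<in>S. c \<chi> = 0)"
  using assms
proof (induction S rule: finite_induct)
  case empty then show ?case by simp
next
  case (insert \<chi>0 S)
  show ?case
  proof (intro allI impI)
    fix c assume H0: "\<forall>x. (\<Sum>\<chi>\<in>insert \<chi>0 S. c \<chi> * \<chi> x) = 0"
    have H: "c \<chi>0 * \<chi>0 x + (\<Sum>\<chi>\<in>S. c \<chi> * \<chi> x) = 0" for x
      using H0 insert(1,2) by simp
    have mul: "\<chi> (x * y) = \<chi> x * \<chi> y" if "\<chi> \<in> insert \<chi>0 S" for \<chi> x y
      using insert(4) that by blast
    have cS: "\<forall>\<chi>\<in>S. c \<chi> * (\<chi> y - \<chi>0 y) = 0" for y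
    proof -
      have "\<forall>x. (\<Sum>\<chi>\<in>S. (c \<chi> * (\<chi> y - \<chi>0 y)) * \<chi> x) = 0"
      proof
        fix x
        have e1: "c \<chi>0 * (\<chi>0 y * \<chi>0 x) + (\<Sum>\<chi>\<in>S. c \<chi> * (\<chi> y * \<chi> x)) = 0"
          using H[of "y * x"] mul insert(1) by simp
        have e2: "\<chi>0 y * (c \<chi>0 * \<chi>0 x) + \<chi>0 y * (\<Sum>\<chi>\<in>S. c \<chi> * \<chi> x) = 0"
          using H[of x] by (metis distrib_left mult_zero_right)
        have "(\<Sum>\<chi>\<in>S. (c \<chi> * (\<chi> y - \<chi>0 y)) * \<chi> x)
            = (\<Sum>\<chi>\<in>S. c \<chi> * (\<chi> y * \<chi> x)) - \<chi>0 y * (\<Sum>\<chi>\<in>S. c \<chi> * \<chi> x)"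
          by (simp add: sum_distrib_left sum_subtractf algebra_simps)
        also have "\<dots> = 0"
        proof -
          have a: "(\<Sum>\<chi>\<in>S. c \<chi> * (\<chi> y * \<chi> x)) = - (c \<chi>0 * (\<chi>0 y * \<chi>0 x))"
            using e1 by (simp add: add_eq_0_iff)
          have b: "\<chi>0 y * (\<Sum>\<chi>\<in>S. c \<chi> * \<chi> x) = - (\<chi>0 y * (c \<chi>0 * \<chi>0 x))"
            using e2 by (simp add: add_eq_0_iff)
          show ?thesis unfolding a b by (simp add: algebra_simps)
        qed
        finally show "(\<Sum>\<chi>\<in>S. (c \<chi> * (\<chi> y - \<chi>0 y)) * \<chi> x) = 0" .
      qed
      then show ?thesis using insert(3)[rule_format, of "\<lambda>\<chi>. c \<chi> * (\<chi> y - \<chi>0 y)"] insert(4,5) by auto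
    qed
    have cS0: "\<forall>\<chi>\<in>S. c \<chi> = 0"
    proof
      fix \<chi> assume "\<chi> \<in> S"
      then have "\<chi> \<noteq> \<chi>0" using insert(2) by auto
      then obtain y where "\<chi> y \<noteq> \<chi>0 y" by auto
      then show "c \<chi> = 0" using cS[of y] \<open>\<chi> \<in> S\<close> by auto
    qed
    have "c \<chi>0 * \<chi>0 1 = 0" using H[of 1] cS0 by simp
    then have "c \<chi>0 = 0" using insert(5) by simp
    then show "\<forall>\<chi>\<in>insert \<chi>0 S. c \<chi> = 0" using cS0 by simp
  qed
qed

context gsetup begin

lemma dedekind: "(\<And>x. (\<Sum>\<sigma>\<in>G. c \<sigma> * \<sigma> x) = 0) \<Longrightarrow> \<sigma> \<in> G \<Longrightarrow> c \<sigma> = 0"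
  using dedekind_aux[OF finG] Gal_mult[of _ k] Gal_one[of _ k] by blast

lemma Tr_nonzero: "\<exists>x. Tr k x \<noteq> 0"
proof (rule ccontr)
  assume "\<not> ?thesis"
  then have "(\<Sum>\<sigma>\<in>G. 1 * \<sigma> x) = 0" for x by (simp add: Tr_def)
  then have "(1::'a) = 0" using dedekind[of "\<lambda>_. 1" id] Gal_id by blast
  then show False by simp
qed

lemma klin_Tr: "klin k (\<lambda>x. Tr k (c * x))"
  unfolding klin_def by (simp add: Tr_in_k distrib_left Tr_add mult.left_commute[of c] Tr_scal)

lemma sum_list_sum_swap:
  "(\<Sum>(a, b)\<leftarrow>xs. \<Sum>s\<in>S. F a b s) = (\<Sum>s\<in>S. \<Sum>(a, b)\<leftarrow>xs. F a b s)"
  by (induction xs) (auto simp: sum.distrib)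

definition E2 :: "('a \<times> 'a) list \<Rightarrow> ('a \<Rightarrow> 'a) \<Rightarrow> ('a \<Rightarrow> 'a) \<Rightarrow> 'a" where
  "E2 xs \<tau> \<tau>' = (\<Sum>(a, b)\<leftarrow>xs. \<tau> a * \<tau>' b)"

lemma TrTr_expand:
  "(\<Sum>(a, b)\<leftarrow>xs. Tr k (c * a) * Tr k (c' * b))
   = (\<Sum>\<tau>\<in>G. \<tau> c * (\<Sum>\<tau>'\<in>G. \<tau>' c' * E2 xs \<tau> \<tau>'))"
proof -
  have "(\<Sum>(a, b)\<leftarrow>xs. Tr k (c * a) * Tr k (c' * b))
      = (\<Sum>(a, b)\<leftarrow>xs. \<Sum>\<tau>\<in>G. \<Sum>\<tau>'\<in>G. \<tau> c * (\<tau>' c' * (\<tau> a * \<tau>' b)))"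
    unfolding Tr_def by (simp add: Gal_mult sum_product algebra_simps)
  also have "\<dots> = (\<Sum>\<tau>\<in>G. (\<Sum>(a, b)\<leftarrow>xs. \<Sum>\<tau>'\<in>G. \<tau> c * (\<tau>' c' * (\<tau> a * \<tau>' b))))"
    by (rule sum_list_sum_swap)
  also have "\<dots> = (\<Sum>\<tau>\<in>G. \<Sum>\<tau>'\<in>G. (\<Sum>(a, b)\<leftarrow>xs. \<tau> c * (\<tau>' c' * (\<tau> a * \<tau>' b))))"
    by (simp add: sum_list_sum_swap)
  also have "\<dots> = (\<Sum>\<tau>\<in>G. \<tau> c * (\<Sum>\<tau>'\<in>G. \<tau>' c' * E2 xs \<tau> \<tau>'))"
    unfolding E2_def by (simp add: sum_distrib_left sum_list_const_mult case_prod_unfold)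
  finally show ?thesis .
qed

lemma teq_E2: assumes "teq k xs ys" "\<tau> \<in> G" "\<tau>' \<in> G" shows "E2 xs \<tau> \<tau>' = E2 ys \<tau> \<tau>'"
proof -
  have eq: "(\<Sum>\<tau>\<in>G. \<tau> c * (\<Sum>\<tau>'\<in>G. \<tau>' c' * (E2 xs \<tau> \<tau>' - E2 ys \<tau> \<tau>'))) = 0" for c c'
  proof -
    have "(\<Sum>(a, b)\<leftarrow>xs. Tr k (c * a) * Tr k (c' * b)) = (\<Sum>(a, b)\<leftarrow>ys. Tr k (c * a) * Tr k (c' * b))"
      using assms(1) klin_Tr unfolding teq_def by blast
    then show ?thesis unfolding TrTr_expand
      by (simp add: right_diff_distrib sum_subtractf)
  qed
  have "(\<Sum>\<tau>'\<in>G. \<tau>' c' * (E2 xs \<tau> \<tau>' - E2 ys \<tau> \<tau>')) = 0" for c'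
    using dedekind[of "\<lambda>\<tau>. \<Sum>\<tau>'\<in>G. \<tau>' c' * (E2 xs \<tau> \<tau>' - E2 ys \<tau> \<tau>')", OF _ assms(2)] eq
    by (simp add: mult.commute)
  then have "E2 xs \<tau> \<tau>' - E2 ys \<tau> \<tau>' = 0"
    using dedekind[of "\<lambda>\<tau>'. E2 xs \<tau> \<tau>' - E2 ys \<tau> \<tau>'", OF _ assms(3)] by (simp add: mult.commute)
  then show ?thesis by simp
qed

lemma teq_phi: assumes "teq k xs ys" "\<sigma> \<in> G" shows "phi xs \<sigma> = phi ys \<sigma>"
  using teq_E2[OF assms(1) Gal_id' assms(2)] unfolding E2_def phi_def by simp

lemma teq_act: assumes "teq k xs ys" shows "act k (phi xs) = act k (phi ys)"
  unfolding act_def using teq_phi[OF assms] by (auto intro!: sum.cong ext)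

end


lemma map_poly_add_hom:
  assumes "f 0 = 0" "\<And>x y. f (x + y) = f x + f y"
  shows "map_poly f (p + q) = map_poly f p + map_poly f q"
  by (intro poly_eqI) (simp add: coeff_map_poly assms)

lemma map_poly_mult_hom:
  fixes f :: "'a::comm_ring_1 \<Rightarrow> 'b::comm_ring_1"
  assumes "f 0 = 0" "\<And>x y. f (x + y) = f x + f y" "\<And>x y. f (x * y) = f x * f y"
  shows "map_poly f (p * q) = map_poly f p * map_poly f q"
proof (induction p rule: pCons_induct)
  case 0 then show ?case by simp
next
  case (pCons a p)
  have "map_poly f (pCons a p * q) = map_poly f (smult a q + pCons 0 (p * q))"
    by (simp add: mult_pCons_left)
  also have "\<dots> = smult (f a) (map_poly f q) + pCons 0 (map_poly f p * map_poly f q)"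
    by (simp add: map_poly_add_hom[OF assms(1,2)] map_poly_smult[OF assms(1,3)] map_poly_pCons[of f, OF assms(1)]
        pCons.IH assms(1))
  also have "\<dots> = map_poly f (pCons a p) * map_poly f q"
    by (simp add: mult_pCons_left map_poly_pCons[of f, OF assms(1)])
  finally show ?case .
qed

lemma map_poly_prod_hom:
  fixes f :: "'a::comm_ring_1 \<Rightarrow> 'b::comm_ring_1"
  assumes "f 0 = 0" "\<And>x y. f (x + y) = f x + f y" "\<And>x y. f (x * y) = f x * f y" "f 1 = 1"
  shows "map_poly f (\<Prod>t\<in>T. h t) = (\<Prod>t\<in>T. map_poly f (h t))"
  by (induction T rule: infinite_finite_induct) (auto simp: map_poly_mult_hom[OF assms(1-3)] assms(4))

lemma mod_n_distinct:
  fixes a b :: int and i j n :: nat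
  assumes "i < n" "j < n" "int n * a + int i = int n * b + int j"
  shows "i = j"
proof -
  have "int n * (a - b) = int j - int i" using assms(3) by (simp add: algebra_simps)
  moreover have "\<bar>int j - int i\<bar> < int n" using assms(1,2) by auto
  ultimately have "\<bar>int n * (a - b)\<bar> < int n" by simp
  then have "\<bar>a - b\<bar> < 1" using assms(1)
    by (simp add: abs_mult)
  then have "a = b" by simp
  then show ?thesis using assms(3) by simp
qed

context gsetup begin

definition Pol :: "'a \<Rightarrow> 'a poly" where "Pol y = (\<Prod>\<tau>\<in>G. [:- \<tau> y, 1:])"

lemma Pol_map: assumes s: "\<sigma> \<in> G" shows "map_poly \<sigma> (Pol y) = Pol y"
proof -
  have "map_poly \<sigma> (Pol y) = (\<Prod>\<tau>\<in>G. map_poly \<sigma> [:- \<tau> y, 1:])"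
    unfolding Pol_def by (rule map_poly_prod_hom) (auto simp: Gal_zero[OF s] Gal_add[OF s] Gal_mult[OF s] Gal_one[OF s])
  also have "\<dots> = (\<Prod>\<tau>\<in>G. [:- (\<sigma> \<circ> \<tau>) y, 1:])"
    by (simp add: map_poly_pCons Gal_zero[OF s] Gal_minus[OF s] Gal_one[OF s])
  also have "\<dots> = Pol y" unfolding Pol_def
    using prod.reindex_bij_betw[OF Gal_reindex[OF s], of "\<lambda>\<tau>. [:- \<tau> y, 1:]"] by simp
  finally show ?thesis .
qed

lemma Pol_coeff_k: "coeff (Pol y) i \<in> k"
proof (rule fixed_in_k)
  fix \<sigma> assume s: "\<sigma> \<in> G"
  have "\<sigma> (coeff (Pol y) i) = coeff (map_poly \<sigma> (Pol y)) i" by (simp add: coeff_map_poly Gal_zero[OF s])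
  then show "\<sigma> (coeff (Pol y) i) = coeff (Pol y) i" using Pol_map[OF s] by simp
qed

lemma Pol_degree: "degree (Pol y) = n" and Pol_lead: "coeff (Pol y) n = 1"
proof -
  have "degree (Pol y) = (\<Sum>\<tau>\<in>G. degree [:- \<tau> y, 1:])"
    unfolding Pol_def by (rule degree_prod_eq_sum_degree) auto
  then show d: "degree (Pol y) = n" by simp
  have "lead_coeff (Pol y) = 1" unfolding Pol_def lead_coeff_prod by simp
  then show "coeff (Pol y) n = 1" using d by simp
qed

lemma Pol_poly: "poly (Pol y) z = (\<Prod>\<tau>\<in>G. z - \<tau> y)"
  unfolding Pol_def poly_prod by simp

lemma Pol_root: "\<tau> \<in> G \<Longrightarrow> poly (Pol y) (\<tau> y) = 0"
  unfolding Pol_poly using finG by (auto intro: prod_zero)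

lemma Pol_expand: "poly (Pol y) z = z ^ n + (\<Sum>i<n. coeff (Pol y) i * z ^ i)"
proof -
  have "poly (Pol y) z = (\<Sum>i\<le>n. coeff (Pol y) i * z ^ i)" using poly_altdef[of "Pol y" z] Pol_degree by simp
  also have "\<dots> = coeff (Pol y) n * z ^ n + (\<Sum>i<n. coeff (Pol y) i * z ^ i)"
    by (simp add: lessThan_Suc_atMost[symmetric])
  finally show ?thesis using Pol_lead by simp
qed

lemma Gal_v_ge1: assumes y: "y \<noteq> 0" "v y = 1" and t: "\<tau> \<in> G" shows "1 \<le> v (\<tau> y)"
proof -
  define b where "b i = coeff (Pol y) i" for i
  have bk: "b i \<in> k" for i unfolding b_def by (rule Pol_coeff_k)
  have ey: "(\<Sum>i<n. b i * y ^ i) = - (y ^ n)"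
    using Pol_root[OF Gal_id', of y] Pol_expand[of y y] unfolding b_def by (simp add: add_eq_0_iff)
  have yn: "y ^ n \<noteq> 0" using y by simp
  have vyn: "v (y ^ n) = int n" using y by (simp add: v_power)
  have dist: "i = j" if h: "i \<in> {..<n}" "j \<in> {..<n}" "b i * y ^ i \<noteq> 0" "b j * y ^ j \<noteq> 0"
      "v (b i * y ^ i) = v (b j * y ^ j)" for i j
  proof -
    obtain wi where wi: "v (b i) = int n * wi" using vk_val[OF bk] h(3) by fastforce
    obtain wj where wj: "v (b j) = int n * wj" using vk_val[OF bk] h(4) by fastforce
    have "int n * wi + int i = int n * wj + int j"
      using h y wi wj by (simp add: v_mult v_power)
    then show ?thesis using mod_n_distinct h(1,2) by blast
  qed
  have ex: "\<exists>i\<in>{..<n}. b i * y ^ i \<noteq> 0"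
  proof (rule ccontr)
    assume a: "\<not> ?thesis"
    have "(\<Sum>i<n. b i * y ^ i) = 0" using a by (intro sum.neutral) blast
    then show False using ey yn by simp
  qed
  obtain p where p: "p \<in> {..<n}" "v (\<Sum>i<n. b i * y ^ i) = v (b p * y ^ p)"
      "\<forall>i\<in>{..<n}. b i * y ^ i \<noteq> 0 \<longrightarrow> v (b p * y ^ p) \<le> v (b i * y ^ i)"
    using sum_distinct_vals[of "{..<n}" "\<lambda>i. b i * y ^ i", OF _ ex dist] by blast
  have bge: "int n \<le> v (b i)" if "i < n" "b i \<noteq> 0" for i
  proof -
    have "b i * y ^ i \<noteq> 0" using that y by simp
    then have "int n \<le> v (b i * y ^ i)" using p ey vyn that by auto
    then have "int n \<le> v (b i) + int i" using that y by (simp add: v_mult v_power)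
    then have "0 < v (b i)" using that by simp
    then show ?thesis using vk_pos[OF bk that(2)] by simp
  qed
  define z where "z = \<tau> y"
  have z0: "z \<noteq> 0" unfolding z_def using Gal_eq0[OF t] y by simp
  have ez: "(\<Sum>i<n. b i * z ^ i) = - (z ^ n)"
    using Pol_root[OF t, of y] Pol_expand[of y z] unfolding b_def z_def by (simp add: add_eq_0_iff)
  show ?thesis
  proof (rule ccontr)
    assume "\<not> 1 \<le> v (\<tau> y)"
    then have s: "v z \<le> 0" unfolding z_def by simp
    have "(\<Sum>i<n. b i * z ^ i) = 0 \<or> int n * v z < v (\<Sum>i<n. b i * z ^ i)"
    proof (rule sum_vgt)
      fix i assume i: "i \<in> {..<n}"
      show "b i * z ^ i = 0 \<or> int n * v z < v (b i * z ^ i)"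
      proof (cases "b i = 0")
        case False
        have "v (b i * z ^ i) = v (b i) + int i * v z" using False z0 by (simp add: v_mult v_power)
        moreover have "int n \<le> v (b i)" using bge False i by simp
        moreover have "(int n - int i) * v z \<le> 0" using i s by (intro mult_nonneg_nonpos) auto
        ultimately show ?thesis using n_pos by (simp add: algebra_simps)
      qed simp
    qed simp
    moreover have "z ^ n \<noteq> 0" using z0 by simp
    moreover have "v (z ^ n) = int n * v z" using z0 by (simp add: v_power)
    ultimately show False using ez by simp
  qed
qed

lemma Gal_vpi: assumes t: "\<tau> \<in> G" shows "v (\<tau> \<pi>) = 1"
proof -
  define s where "s = v (\<tau> \<pi>)"
  have s1: "1 \<le> s" unfolding s_def using Gal_v_ge1[OF pi0 vpi t] .
  have tp0: "\<tau> \<pi> \<noteq> 0" using Gal_eq0[OF t] pi0 by simp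
  define z where "z = \<tau> \<pi> * \<pi> powi (1 - s)"
  have z0: "z \<noteq> 0" unfolding z_def using tp0 pi0 by simp
  have vz: "v z = 1" unfolding z_def using tp0 pi0 by (simp add: v_mult v_powi vpi s_def)
  have ti: "inv \<tau> \<in> G" using Gal_inv[OF t] .
  have "1 \<le> v (inv \<tau> z)" using Gal_v_ge1[OF z0 vz ti] .
  moreover have "inv \<tau> z = \<pi> * (inv \<tau> \<pi>) powi (1 - s)"
    unfolding z_def by (simp add: Gal_mult[OF ti] Gal_powi[OF ti] Gal_inv_cancel2[OF t])
  moreover have ip0: "inv \<tau> \<pi> \<noteq> 0" using Gal_eq0[OF ti] pi0 by simp
  moreover have "1 \<le> v (inv \<tau> \<pi>)" using Gal_v_ge1[OF pi0 vpi ti] .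
  moreover have "(1 - s) * v (inv \<tau> \<pi>) \<le> (1 - s) * 1"
    using s1 \<open>1 \<le> v (inv \<tau> \<pi>)\<close> by (intro mult_left_mono_neg) auto
  ultimately have "1 \<le> 1 + (1 - s) * v (inv \<tau> \<pi>)" and "(1 - s) * v (inv \<tau> \<pi>) \<le> 1 - s"
    using pi0 s1 by (simp_all add: v_mult v_powi vpi)
  then have "s \<le> 1" by linarith
  then show ?thesis using s1 s_def by simp
qed

lemma Gal_v_ge: assumes t: "\<tau> \<in> G" and x: "x \<noteq> 0" shows "v x \<le> v (\<tau> x)"
proof -
  define y where "y = x * \<pi> powi (1 - v x)"
  have y0: "y \<noteq> 0" unfolding y_def using x pi0 by simp
  have vy: "v y = 1" unfolding y_def using x pi0 by (simp add: v_mult v_powi vpi)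
  have tx0: "\<tau> x \<noteq> 0" using Gal_eq0[OF t] x by simp
  have tp0: "\<tau> \<pi> \<noteq> 0" using Gal_eq0[OF t] pi0 by simp
  have "1 \<le> v (\<tau> y)" using Gal_v_ge1[OF y0 vy t] .
  moreover have "v (\<tau> y) = v (\<tau> x) + (1 - v x)"
    unfolding y_def using tx0 tp0 by (simp add: Gal_mult[OF t] Gal_powi[OF t] v_mult v_powi Gal_vpi[OF t])
  ultimately show ?thesis by simp
qed

lemma Gal_v: assumes t: "\<tau> \<in> G" shows "v (\<tau> x) = v x"
proof (cases "x = 0")
  case True then show ?thesis by (simp add: Gal_zero[OF t])
next
  case False
  have ti: "inv \<tau> \<in> G" using Gal_inv[OF t] .
  have tx0: "\<tau> x \<noteq> 0" using Gal_eq0[OF t] False by simp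
  have "v (\<tau> x) \<le> v (inv \<tau> (\<tau> x))" using Gal_v_ge[OF ti tx0] .
  then show ?thesis using Gal_v_ge[OF t False] by (simp add: Gal_inv_cancel2[OF t])
qed

lemma Gal_mpow: "\<tau> \<in> G \<Longrightarrow> x \<in> mpow v B \<Longrightarrow> \<tau> x \<in> mpow v B"
  by (auto simp: mpow_def Gal_v Gal_eq0)

lemma Tr_mpow: "x \<in> mpow v B \<Longrightarrow> Tr k x \<in> mpow v B"
  unfolding Tr_def using finG by (intro mpow_sum) (auto intro: Gal_mpow)

end


lemma lin_dep:
  fixes E :: "'e set"
  assumes "finite E"
  shows "\<forall>(w :: 'i \<Rightarrow> 'e \<Rightarrow> 'a::field) S. finite S \<longrightarrow> card E < card S \<longrightarrow>
           (\<exists>y. (\<exists>q\<in>S. y q \<noteq> 0) \<and> (\<forall>e\<in>E. (\<Sum>q\<in>S. y q * w q e) = 0))"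
  using assms
proof (induction E rule: finite_induct)
  case empty
  show ?case
  proof (intro allI impI)
    fix w :: "'i \<Rightarrow> 'e \<Rightarrow> 'a" and S :: "'i set" assume "finite S" "card {} < card S"
    then obtain q where "q \<in> S" by (metis card.empty card_gt_0_iff ex_in_conv)
    then show "\<exists>y. (\<exists>q\<in>S. y q \<noteq> 0) \<and> (\<forall>e\<in>{}. (\<Sum>q\<in>S. y q * w q e) = 0)"
      by (intro exI[of _ "\<lambda>_. 1"]) auto
  qed
next
  case (insert e0 E)
  show ?case
  proof (intro allI impI)
    fix w :: "'i \<Rightarrow> 'e \<Rightarrow> 'a" and S :: "'i set"
    assume fS: "finite S" and cS: "card (insert e0 E) < card S"
    have cE: "card E + 1 < card S" using cS insert(1,2) by simp
    show "\<exists>y. (\<exists>q\<in>S. y q \<noteq> 0) \<and> (\<forall>e\<in>insert e0 E. (\<Sum>q\<in>S. y q * w q e) = 0)"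
    proof (cases "\<forall>q\<in>S. w q e0 = 0")
      case True
      obtain y where y: "\<exists>q\<in>S. y q \<noteq> 0" "\<forall>e\<in>E. (\<Sum>q\<in>S. y q * w q e) = 0"
        using insert(3)[rule_format, OF fS, of w] cE by auto
      show ?thesis using y True by (intro exI[of _ y]) auto
    next
      case False
      then obtain p where p: "p \<in> S" "w p e0 \<noteq> 0" by auto
      define S' where "S' = S - {p}"
      define w' where "w' q e = w q e - (w q e0 / w p e0) * w p e" for q e
      have fS': "finite S'" using fS S'_def by simp
      have cS': "card E < card S'" using cE p fS S'_def by simp
      obtain y' where y': "\<exists>q\<in>S'. y' q \<noteq> 0" "\<forall>e\<in>E. (\<Sum>q\<in>S'. y' q * w' q e) = 0"
        using insert(3)[rule_format, OF fS' cS', of w'] by auto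
      define A where "A = (\<Sum>q\<in>S'. y' q * w q e0)"
      define y where "y q = (if q = p then - A / w p e0 else y' q)" for q
      have split: "(\<Sum>q\<in>S. y q * w q e) = y p * w p e + (\<Sum>q\<in>S'. y' q * w q e)" for e
      proof -
        have "(\<Sum>q\<in>S. y q * w q e) = y p * w p e + (\<Sum>q\<in>S'. y q * w q e)"
          unfolding S'_def using fS p by (simp add: sum.remove)
        moreover have "(\<Sum>q\<in>S'. y q * w q e) = (\<Sum>q\<in>S'. y' q * w q e)"
          unfolding y_def S'_def by (intro sum.cong) auto
        ultimately show ?thesis by simp
      qed
      have "\<exists>q\<in>S. y q \<noteq> 0" using y' unfolding y_def S'_def by auto
      moreover have "(\<Sum>q\<in>S. y q * w q e) = 0" if e: "e \<in> insert e0 E" for e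
      proof (cases "e = e0")
        case True
        have yp: "y p = - A / w p e0" by (simp add: y_def)
        show ?thesis using split[of e0] True p by (simp add: yp A_def)
      next
        case False
        then have eE: "e \<in> E" using e by simp
        have "(\<Sum>q\<in>S'. y' q * w' q e) = (\<Sum>q\<in>S'. y' q * w q e - (y' q * w q e0) * (w p e / w p e0))"
          unfolding w'_def by (intro sum.cong) (auto simp: algebra_simps)
        also have "\<dots> = (\<Sum>q\<in>S'. y' q * w q e) - A * (w p e / w p e0)"
          unfolding A_def by (simp add: sum_subtractf sum_distrib_right sum_divide_distrib)
        finally have "(\<Sum>q\<in>S'. y' q * w' q e) = (\<Sum>q\<in>S'. y' q * w q e) - A / w p e0 * w p e"
          by simp
        then have "(\<Sum>q\<in>S'. y' q * w q e) = A / w p e0 * w p e" using y'(2) eE by simp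
        moreover have yp: "y p = - A / w p e0" by (simp add: y_def)
        ultimately show ?thesis using split[of e] p by simp
      qed
      ultimately show ?thesis by blast
    qed
  qed
qed

context gsetup begin

lemma artin:
  fixes x :: "'i \<Rightarrow> 'a"
  assumes fS: "finite S" and cS: "n < card S"
  shows "\<exists>c. (\<forall>q\<in>S. c q \<in> k) \<and> (\<exists>q\<in>S. c q \<noteq> 0) \<and> (\<Sum>q\<in>S. c q * x q) = 0"
proof -
  define Sol where "Sol = {y. (\<exists>q\<in>S. y q \<noteq> 0) \<and> (\<forall>\<tau>\<in>G. (\<Sum>q\<in>S. y q * \<tau> (x q)) = 0)}"
  define supp where "supp y = {q\<in>S. y q \<noteq> (0::'a)}" for y
  have "\<exists>y. y \<in> Sol" unfolding Sol_def
    using lin_dep[OF finG, rule_format, OF fS cS, of "\<lambda>q \<tau>. \<tau> (x q)"] by auto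
  then obtain y where y: "y \<in> Sol" and ymin: "\<And>z. z \<in> Sol \<Longrightarrow> card (supp y) \<le> card (supp z)"
    using ex_has_least_nat[of "\<lambda>y. y \<in> Sol" _ "\<lambda>y. card (supp y)"] by blast
  obtain q0 where q0: "q0 \<in> S" "y q0 \<noteq> 0" using y unfolding Sol_def by auto
  define y' where "y' q = y q / y q0" for q
  have supp': "supp y' = supp y" unfolding supp_def y'_def using q0 by auto
  have eq': "(\<Sum>q\<in>S. y' q * \<tau> (x q)) = 0" if t: "\<tau> \<in> G" for \<tau>
  proof -
    have "(\<Sum>q\<in>S. y' q * \<tau> (x q)) = (\<Sum>q\<in>S. y q * \<tau> (x q)) / y q0"
      unfolding y'_def by (simp add: sum_divide_distrib)
    then show ?thesis using y t unfolding Sol_def by simp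
  qed
  have y'q0: "y' q0 = 1" unfolding y'_def using q0 by simp
  have fixy: "\<sigma> (y' q) = y' q" if s: "\<sigma> \<in> G" and q: "q \<in> S" for \<sigma> q
  proof (rule ccontr)
    assume ne: "\<sigma> (y' q) \<noteq> y' q"
    define z where "z q = \<sigma> (y' q) - y' q" for q
    have "z \<in> Sol" unfolding Sol_def
    proof (intro CollectI conjI ballI)
      show "\<exists>q\<in>S. z q \<noteq> 0" using ne q unfolding z_def by auto
      fix \<tau> assume t: "\<tau> \<in> G"
      have it: "inv \<sigma> \<circ> \<tau> \<in> G" using Gal_comp[OF Gal_inv[OF s] t] .
      have "(\<Sum>q\<in>S. \<sigma> (y' q) * \<tau> (x q)) = \<sigma> (\<Sum>q\<in>S. y' q * (inv \<sigma> \<circ> \<tau>) (x q))"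
        by (simp add: Gal_sum[OF s] Gal_mult[OF s] Gal_inv_cancel1[OF s])
      also have "\<dots> = 0" using eq'[OF it] Gal_zero[OF s] by simp
      finally have "(\<Sum>q\<in>S. \<sigma> (y' q) * \<tau> (x q)) = 0" .
      then show "(\<Sum>q\<in>S. z q * \<tau> (x q)) = 0"
        unfolding z_def using eq'[OF t] by (simp add: left_diff_distrib sum_subtractf)
    qed
    then have le: "card (supp y) \<le> card (supp z)" by (rule ymin)
    have sub: "supp z \<subseteq> supp y' - {q0}"
      unfolding supp_def z_def using y'q0 Gal_one[OF s] Gal_zero[OF s] by auto
    have "card (supp z) < card (supp y')"
    proof -
      have "card (supp z) \<le> card (supp y' - {q0})"
        using sub fS by (intro card_mono) (auto simp: supp_def)
      also have "\<dots> < card (supp y')"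
        using q0 fS y'q0 by (intro card_Diff1_less) (auto simp: supp_def)
      finally show ?thesis .
    qed
    then show False using le supp' by simp
  qed
  have "\<forall>q\<in>S. y' q \<in> k" using fixy fixed_in_k by blast
  moreover have "(\<Sum>q\<in>S. y' q * x q) = 0" using eq'[OF Gal_id'] by simp
  moreover have "\<exists>q\<in>S. y' q \<noteq> 0" using q0(1) y'q0 by (intro bexI[of _ q0]) auto
  ultimately show ?thesis by blast
qed

lemma residue_k:
  assumes e: "\<epsilon> \<in> mpow v 0"
  shows "\<exists>c\<in>k \<inter> mpow v 0. \<epsilon> - c \<in> mpow v 1"
proof (rule ccontr)
  assume H: "\<not> ?thesis"
  define x where "x q = (if q = n then \<epsilon> else \<pi> ^ q)" for q
  obtain c where ck: "\<forall>q\<in>{..n}. c q \<in> k" and cnz: "\<exists>q\<in>{..n}. c q \<noteq> 0"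
    and csum: "(\<Sum>q\<in>{..n}. c q * x q) = 0"
    using artin[of "{..n}" x] by auto
  define T where "T q = c q * \<pi> ^ q + (if q = 0 then c n * \<epsilon> else 0)" for q
  have sumT: "(\<Sum>q<n. T q) = 0"
  proof -
    have "(\<Sum>q\<in>{..n}. c q * x q) = c n * \<epsilon> + (\<Sum>q<n. c q * \<pi> ^ q)"
      by (simp add: lessThan_Suc_atMost[symmetric] x_def)
    moreover have "(\<Sum>q<n. T q) = (\<Sum>q<n. c q * \<pi> ^ q) + c n * \<epsilon>"
      unfolding T_def using n_pos by (simp add: sum.distrib)
    ultimately show ?thesis using csum by (simp add: add.commute)
  qed
  have T0: "T 0 \<noteq> 0 \<and> (\<exists>w. v (T 0) = int n * w)" if cn: "c n \<noteq> 0"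
  proof -
    define e where "e = c 0 / c n"
    have ek: "e \<in> k" unfolding e_def using ck kp(8)[of "c 0" "c n"] by auto
    have T0e: "T 0 = c n * (e + \<epsilon>)" unfolding T_def e_def using cn by (simp add: field_simps)
    have "e + \<epsilon> \<noteq> 0 \<and> (\<exists>w. v (e + \<epsilon>) = int n * w)"
    proof (cases "e \<in> mpow v 0")
      case True
      have "- e \<in> k \<inter> mpow v 0" using True ek kp(5) mpow_minus by auto
      then have "\<epsilon> - (- e) \<notin> mpow v 1" using H by blast
      then have "\<epsilon> + e \<notin> mpow v 1" by simp
      moreover have "\<epsilon> + e \<in> mpow v 0" using e True mpow_add by auto
      ultimately have "e + \<epsilon> \<noteq> 0" "v (e + \<epsilon>) = 0" by (auto simp: mpow_def add.commute)
      then show ?thesis by auto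
    next
      case False
      then have e0: "e \<noteq> 0" "v e < 0" by (auto simp: mpow_def)
      have "\<epsilon> = 0 \<or> v e < v \<epsilon>" using e e0 by (auto simp: mpow_def)
      then have "e + \<epsilon> \<noteq> 0 \<and> v (e + \<epsilon>) = v e" using v_add_strict[OF e0(1)] by blast
      then show ?thesis using vk_val[OF ek e0(1)] by auto
    qed
    then obtain w1 where w1: "e + \<epsilon> \<noteq> 0" "v (e + \<epsilon>) = int n * w1" by blast
    obtain w where w: "v (c n) = int n * w" using vk_val ck cn by fastforce
    have "v (T 0) = int n * (w + w1)" unfolding T0e using cn w1 w v_mult[of "c n" "e + \<epsilon>"] by (simp add: algebra_simps)
    moreover have "T 0 \<noteq> 0" unfolding T0e using cn w1 by simp
    ultimately show ?thesis by blast
  qed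
  have Tval: "\<exists>w. v (T q) = int n * w + int q" if q: "q < n" "T q \<noteq> 0" for q
  proof (cases "q = 0")
    case True
    have "c n \<noteq> 0 \<or> T 0 = c 0" unfolding T_def by auto
    then show ?thesis
    proof
      assume "c n \<noteq> 0" then show ?thesis using T0 True by auto
    next
      assume "T 0 = c 0"
      then show ?thesis using True q vk_val[of "c 0"] ck by auto
    qed
  next
    case False
    then have Tq: "T q = c q * \<pi> ^ q" unfolding T_def by simp
    then have "c q \<noteq> 0" using q by auto
    then obtain w where "v (c q) = int n * w" using vk_val ck q by fastforce
    then show ?thesis using Tq \<open>c q \<noteq> 0\<close> pi0 by (auto simp: v_mult v_power vpi)
  qed
  have allz: "\<forall>q\<in>{..<n}. T q = 0"
  proof (rule ccontr)
    assume "\<not> ?thesis"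
    then have ex: "\<exists>q\<in>{..<n}. T q \<noteq> 0" by auto
    have "(\<Sum>q<n. T q) \<noteq> 0"
    proof (rule conjunct1[OF sum_distinct_vals[OF _ ex]])
      fix i j assume h: "i \<in> {..<n}" "j \<in> {..<n}" "T i \<noteq> 0" "T j \<noteq> 0" "v (T i) = v (T j)"
      obtain wi where wi: "v (T i) = int n * wi + int i" using Tval h by blast
      obtain wj where wj: "v (T j) = int n * wj + int j" using Tval h by blast
      show "i = j" using mod_n_distinct[of i n j wi wj] h wi wj by auto
    qed simp
    then show False using sumT by simp
  qed
  have cn0: "c n = 0" using allz T0 n_pos by auto
  have "c q = 0" if "q \<in> {..n}" for q
  proof (cases "q = n")
    case True then show ?thesis using cn0 by simp
  next
    case False
    then have "q < n" using that by auto
    then have "T q = 0" using allz by auto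
    then show ?thesis unfolding T_def using cn0 pi0 by (auto split: if_splits)
  qed
  then show False using cnz by auto
qed

end


context gsetup begin

definition Cod :: "'a set" where "Cod = {x. \<forall>y\<in>mpow v 0. Tr k (x * y) \<in> k \<inter> mpow v 0}"

lemma Cod_ex: "\<exists>\<delta>. Cod = mpow v (- \<delta>)"
proof -
  obtain x0 where x0: "Tr k x0 \<noteq> 0" using Tr_nonzero by blast
  define t where "t = Tr k x0"
  have tk: "t \<in> k" "t \<noteq> 0" using x0 Tr_in_k t_def by auto
  have x00: "x0 \<noteq> 0" using x0 by auto
  obtain wt where wt: "v t = int n * wt" using vk_val[OF tk] by blast
  obtain c where c: "c \<in> k" "c \<noteq> 0" "v c = int n * (- wt - 1)" using vk_ex by blast
  define L where "L = v x0 - v t - int n + 1"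
  have lb: "L \<le> v x" if x: "x \<in> Cod" "x \<noteq> 0" for x
  proof (rule ccontr)
    assume "\<not> L \<le> v x"
    then have lt: "v x \<le> v x0 - v t - int n" unfolding L_def by simp
    define y where "y = x0 * c / x"
    have vy: "v y = v x0 + v c - v x" unfolding y_def using x00 c x by (simp add: v_divide v_mult)
    have "v c = - v t - int n" using c wt by (simp add: algebra_simps)
    then have "y \<in> mpow v 0" using vy lt by (simp add: mpow_def)
    then have "Tr k (x * y) \<in> mpow v 0" using x unfolding Cod_def by blast
    moreover have "x * y = c * x0" unfolding y_def using x by simp
    moreover have "Tr k (c * x0) = c * t" using Tr_scal[OF c(1)] t_def by simp
    moreover have "v (c * t) = - int n" using c tk wt by (simp add: v_mult algebra_simps)
    ultimately show False using c tk n_pos by (simp add: mpow_def)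
  qed
  have oneC: "1 \<in> Cod" unfolding Cod_def using Tr_in_k Tr_mpow by auto
  obtain x1 where x1: "x1 \<in> Cod - {0}"
    and x1min: "\<And>x. x \<in> Cod - {0} \<Longrightarrow> nat (v x1 - L) \<le> nat (v x - L)"
    using ex_has_least_nat[of "\<lambda>x. x \<in> Cod - {0}" 1 "\<lambda>x. nat (v x - L)"] oneC by auto
  have min: "v x1 \<le> v x" if "x \<in> Cod" "x \<noteq> 0" for x
    using x1min[of x] lb[of x] lb[of x1] x1 that by auto
  have "Cod = mpow v (v x1)"
  proof
    show "Cod \<subseteq> mpow v (v x1)" using min by (auto simp: mpow_def)
    show "mpow v (v x1) \<subseteq> Cod"
    proof
      fix x assume x: "x \<in> mpow v (v x1)"
      show "x \<in> Cod"
      proof (cases "x = 0")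
        case True then show ?thesis unfolding Cod_def using kp(1) by simp
      next
        case False
        define z where "z = x / x1"
        have x10: "x1 \<noteq> 0" using x1 by simp
        have z: "z \<in> mpow v 0" unfolding z_def using x False x10 by (simp add: mpow_def v_divide)
        have "Tr k (x * y) \<in> k \<inter> mpow v 0" if y: "y \<in> mpow v 0" for y
        proof -
          have e: "x * y = x1 * (z * y)" unfolding z_def using x10 by simp
          have zy: "z * y \<in> mpow v 0" using mpow_mult[OF z y] by simp
          have "Tr k (x1 * (z * y)) \<in> k \<inter> mpow v 0" using x1 zy unfolding Cod_def by blast
          then show ?thesis by (simp only: e)
        qed
        then show ?thesis unfolding Cod_def by blast
      qed
    qed
  qed
  then show ?thesis by (intro exI[of _ "- v x1"]) simp
qed

lemma different_val_eq: "Cod = mpow v (- different_val k v)"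
proof -
  obtain \<delta> where d: "Cod = mpow v (- \<delta>)" using Cod_ex by blast
  have "different_val k v = \<delta>"
    unfolding different_val_def
  proof (rule the_equality)
    show "{x. \<forall>y\<in>mpow v 0. Tr k (x * y) \<in> k \<inter> mpow v 0} = mpow v (- \<delta>)" using d Cod_def by simp
    fix \<delta>' assume "{x. \<forall>y\<in>mpow v 0. Tr k (x * y) \<in> k \<inter> mpow v 0} = mpow v (- \<delta>')"
    then have "mpow v (- \<delta>') = mpow v (- \<delta>)" using d Cod_def by simp
    then show "\<delta>' = \<delta>" using mpow_eq_iff by simp
  qed
  then show ?thesis using d by simp
qed

lemma cod_mem: "x \<in> mpow v (- different_val k v) \<Longrightarrow> Tr k x \<in> mpow v 0"
  using different_val_eq unfolding Cod_def by (metis (no_types, lifting) IntD2 mem_Collect_eq mult.right_neutral one_mpow0)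

lemma cod_inv: "(\<And>y. y \<in> mpow v 0 \<Longrightarrow> Tr k (x * y) \<in> k \<inter> mpow v 0) \<Longrightarrow> x \<in> mpow v (- different_val k v)"
  using different_val_eq unfolding Cod_def by blast

abbreviation "d \<equiv> depth k v"

lemma d_eq: "d = different_val k v - int n + 1" by (simp add: depth_def)

lemma Tr_bound: assumes y: "y \<in> mpow v t" shows "Tr k y \<in> mpow v (t + d)"
proof (rule ccontr)
  assume H: "Tr k y \<notin> mpow v (t + d)"
  then have T0: "Tr k y \<noteq> 0" by auto
  then have y0: "y \<noteq> 0" by auto
  obtain q where q: "v (Tr k y) = int n * q" using vk_val[OF Tr_in_k T0] by blast
  have lt: "int n * q < t + d" using H T0 q by (simp add: mpow_def)
  obtain c where c: "c \<in> k" "c \<noteq> 0" "v c = int n * (q + 1)" using vk_ex by blast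
  define z where "z = y / c"
  have "v z = v y - int n * (q + 1)" unfolding z_def using y0 c by (simp add: v_divide)
  moreover have "t \<le> v y" using y y0 by (simp add: mpow_def)
  ultimately have "- different_val k v \<le> v z" using lt d_eq by (simp add: algebra_simps)
  then have "Tr k z \<in> mpow v 0" using cod_mem by (simp add: mpow_def)
  moreover have "Tr k z = Tr k y / c" unfolding z_def using Tr_div[OF c(1)] .
  moreover have "v (Tr k y / c) = - int n" using T0 c q by (simp add: v_divide algebra_simps)
  ultimately show False using T0 c n_pos by (simp add: mpow_def)
qed

lemma Tr_k_mpow: "x \<in> mpow v B \<Longrightarrow> Tr k x \<in> mpow v B" using Tr_mpow .

lemma k_mpow_pos: assumes "x \<in> k" "x \<in> mpow v 1" shows "x \<in> mpow v (int n)"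
proof (cases "x = 0")
  case False
  then have "1 \<le> v x" using assms by (simp add: mpow_def)
  then show ?thesis using vk_pos[OF assms(1) False] by (simp add: mpow_def)
qed simp

lemma k_mpow_nonneg: assumes "x \<in> k" "x \<in> mpow v (1 - int n)" shows "x \<in> mpow v 0"
proof (cases "x = 0")
  case False
  then have "1 - int n \<le> v x" using assms by (simp add: mpow_def)
  then show ?thesis using vk_nonneg[OF assms(1) False] by (simp add: mpow_def)
qed simp

abbreviation "cp \<equiv> c_pi k v \<pi>"

lemma cp_O: "cp \<in> mpow v 0"
proof -
  have "\<pi> powi (- d) \<in> mpow v (- d)" using pi0 by (simp add: mpow_def v_powi vpi)
  then show ?thesis unfolding c_pi_def using Tr_bound by fastforce
qed

lemma cp_unit: "cp \<notin> mpow v 1"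
proof
  assume H: "cp \<in> mpow v 1"
  define P where "P = \<pi> powi (- d)"
  have P: "P \<in> mpow v (- d)" "P \<noteq> 0" "v P = - d" using pi0 by (simp_all add: P_def mpow_def v_powi vpi)
  have cpP: "cp = Tr k P" unfolding c_pi_def P_def by simp
  obtain w where w: "w \<in> k" "w \<noteq> 0" "v w = int n * 1" using vk_ex by blast
  have "(P / w) \<in> mpow v (- different_val k v)"
  proof (rule cod_inv)
    fix y assume y: "y \<in> mpow v 0"
    obtain c where c: "c \<in> k \<inter> mpow v 0" "y - c \<in> mpow v 1" using residue_k[OF y] by blast
    have ck: "c \<in> k" using c by simp
    have "Tr k (P * y) = c * cp + Tr k (P * (y - c))"
      unfolding cpP by (simp add: right_diff_distrib Tr_diff Tr_scal[OF ck] mult.commute[of P c])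
    moreover have "c * cp \<in> mpow v 1" using mpow_mult[of c 0 cp 1] c H by simp
    moreover have "Tr k (P * (y - c)) \<in> mpow v 1"
      using Tr_bound[OF mpow_mult[OF P(1) c(2)]] by simp
    ultimately have "Tr k (P * y) \<in> mpow v 1" by (simp add: mpow_add)
    then have "Tr k (P * y) \<in> mpow v (int n)" using k_mpow_pos Tr_in_k by blast
    moreover have "Tr k (P / w * y) = Tr k (P * y) / w"
      using Tr_div[OF w(1), of "P * y"] by (simp add: field_simps)
    ultimately have "Tr k (P / w * y) \<in> mpow v 0" using w
      by (cases "Tr k (P * y) = 0") (auto simp: mpow_def v_divide)
    then show "Tr k (P / w * y) \<in> k \<inter> mpow v 0" using Tr_in_k by simp
  qed
  moreover have "v (P / w) = - different_val k v - 1" using P w d_eq by (simp add: v_divide)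
  moreover have "P / w \<noteq> 0" using P w by simp
  ultimately show False by (simp add: mpow_def)
qed

end


section \<open>tensor lemmas\<close>

lemma klin_add: "klin k f \<Longrightarrow> f (x + y) = f x + f y" unfolding klin_def by blast
lemma klin_zero: assumes "klin k f" shows "f 0 = 0"
proof -
  have "f 0 = f 0 + f 0" using klin_add[OF assms, of 0 0] by simp
  then show ?thesis by (simp only: add_cancel_right_right)
qed
lemma klin_minus: "klin k f \<Longrightarrow> f (- x) = - f x"
  using klin_add[of k f x "-x"] klin_zero[of k f] by (simp add: add_eq_0_iff)
lemma klin_diff: "klin k f \<Longrightarrow> f (x - y) = f x - f y"
  using klin_add[of k f x "-y"] klin_minus[of k f y] by simp
lemma klin_scal: "klin k f \<Longrightarrow> c \<in> k \<Longrightarrow> f (c * x) = c * f x" unfolding klin_def by blast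
lemma klin_rmult: "klin k f \<Longrightarrow> klin k (\<lambda>x. f (x * P))"
  unfolding klin_def by (simp add: distrib_right mult.assoc)

lemma teq_refl: "teq k xs xs" by (simp add: teq_def)

lemma teq_trans: "teq k xs ys \<Longrightarrow> teq k ys zs \<Longrightarrow> teq k xs zs"
  unfolding teq_def by simp

lemma Xmem_teq: assumes "teq k xs ys" "Xmem k v i ys" shows "Xmem k v i xs"
proof -
  obtain zs where "teq k ys zs" "\<forall>(a, b)\<in>set zs. \<exists>j. a \<in> mpow v j \<and> b \<in> mpow v (i - j)"
    using assms(2) unfolding Xmem_def by blast
  then show ?thesis unfolding Xmem_def using teq_trans[OF assms(1)] by blast
qed

lemma Xmem_good: "(\<forall>(a, b)\<in>set ys. \<exists>j. a \<in> mpow v j \<and> b \<in> mpow v (i - j)) \<Longrightarrow> Xmem k v i ys"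
  unfolding Xmem_def using teq_refl by blast

lemma Xmem_nil: "Xmem k v i []" by (rule Xmem_good) simp

lemma teq_nil: assumes "\<And>f g. klin k f \<Longrightarrow> klin k g \<Longrightarrow> (\<Sum>(a, b)\<leftarrow>xs. f a * g b) = 0"
  shows "Xmem k v i xs"
proof -
  have "teq k xs []" using assms by (simp add: teq_def)
  then show ?thesis using Xmem_teq Xmem_nil by blast
qed

lemma sum_list_tneg: "klin k f \<Longrightarrow> (\<Sum>(a, b)\<leftarrow>tneg ys. f a * g b) = - (\<Sum>(a, b)\<leftarrow>ys. f a * g b)"
  unfolding tneg_def by (induction ys) (auto simp: klin_minus)

lemma teq_diff_X: "teq k xs ys \<Longrightarrow> Xmem k v i (tadd xs (tneg ys))"
  by (rule teq_nil) (simp add: tadd_def sum_list_tneg teq_def)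

lemma tmul_single: "tmul xs [(c, P)] = map (\<lambda>(a, b). (a * c, b * P)) xs"
  unfolding tmul_def by (induction xs) auto

lemma teq_map_r: assumes "teq k xs ys"
  shows "teq k (map (\<lambda>(a, b). (a * 1, b * P)) xs) (map (\<lambda>(a, b). (a * 1, b * P)) ys)"
  unfolding teq_def
proof (intro allI impI)
  fix f g assume f: "klin k f" and g: "klin k g"
  have g': "klin k (\<lambda>x. g (x * P))" using klin_rmult[OF g] .
  have "(\<Sum>(a, b)\<leftarrow>xs. f a * g (b * P)) = (\<Sum>(a, b)\<leftarrow>ys. f a * g (b * P))"
    using assms f g' unfolding teq_def by blast
  then show "(\<Sum>(a, b)\<leftarrow>map (\<lambda>(a, b). (a * 1, b * P)) xs. f a * g b) =
             (\<Sum>(a, b)\<leftarrow>map (\<lambda>(a, b). (a * 1, b * P)) ys. f a * g b)"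
    by (simp add: case_prod_unfold o_def)
qed

lemma phi_single: "phi [(a, b)] \<sigma> = a * \<sigma> b" by (simp add: phi_def)
lemma phi_cons: "phi (y # ys) \<sigma> = phi [y] \<sigma> + phi ys \<sigma>" by (cases y) (simp add: phi_def)
lemma phi_nil: "phi [] \<sigma> = 0" by (simp add: phi_def)

lemma act_cons: "act k (phi (y # ys)) x = act k (phi [y]) x + act k (phi ys) x"
  unfolding act_def phi_cons[of y ys] distrib_right by (rule sum.distrib)
lemma act_nil: "act k (phi []) x = 0"
  unfolding act_def phi_nil by simp
lemma act_single: "act k (phi [(a, b)]) x = a * Tr k (b * x)"
  unfolding act_def Tr_def phi_single sum_distrib_left
  by (intro sum.cong refl) (simp add: Gal_mult[of _ k] mult.assoc)

lemma degree_Xn1: "n \<ge> 1 \<Longrightarrow> degree (Xn1 n :: 'b::field poly) = n"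
proof -
  assume n: "n \<ge> 1"
  have "Xn1 n = monom (1::'b) n + (- 1)" by (simp add: Xn1_def)
  moreover have "degree (- 1 :: 'b poly) < degree (monom (1::'b) n)" using n by (simp add: degree_monom_eq)
  then have "degree (monom (1::'b) n + (- 1)) = degree (monom (1::'b) n)" by (rule degree_add_eq_left)
  ultimately show ?thesis by (simp add: degree_monom_eq)
qed

lemma X_eq_monom: "[:0, 1:] = monom 1 1" by (simp add: monom_Suc monom_0)

locale msetup = gsetup v k \<pi> for v :: "'a::field \<Rightarrow> int" and k \<pi> +
  fixes r :: "'a \<Rightarrow> 'b::field" and \<rho> :: "('a \<times> 'a) list \<Rightarrow> 'b poly"
  assumes rm: "residue_map v r" and rX: "is_rX k v \<pi> r \<rho>"
begin

lemma r_add: "x \<in> mpow v 0 \<Longrightarrow> y \<in> mpow v 0 \<Longrightarrow> r (x + y) = r x + r y"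
  using rm unfolding residue_map_def by blast
lemma r_mult: "x \<in> mpow v 0 \<Longrightarrow> y \<in> mpow v 0 \<Longrightarrow> r (x * y) = r x * r y"
  using rm unfolding residue_map_def by blast
lemma r_one: "r 1 = 1" using rm unfolding residue_map_def by blast
lemma r_zero_iff: assumes x: "x \<in> mpow v 0" shows "r x = 0 \<longleftrightarrow> x \<in> mpow v 1"
proof -
  have e: "{x \<in> mpow v 0. r x = 0} = mpow v 1" using rm unfolding residue_map_def by blast
  show ?thesis using x by (simp only: e[symmetric] mem_Collect_eq) simp
qed
lemma r_m1: "x \<in> mpow v 1 \<Longrightarrow> r x = 0"
  using r_zero_iff[of x] mpow_mono[of x 1 0] by simp
lemma r_zero[simp]: "r 0 = 0" using r_m1 by simp

abbreviation "X0 \<equiv> {xs. Xmem k v 0 xs}"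

lemma rho_eq: "Xmem k v 0 xs \<Longrightarrow> Xmem k v 0 ys \<Longrightarrow> \<rho> xs = \<rho> ys \<longleftrightarrow> Xmem k v 1 (tadd xs (tneg ys))"
  using rX unfolding is_rX_def Let_def by blast
lemma rho_add: "Xmem k v 0 xs \<Longrightarrow> Xmem k v 0 ys \<Longrightarrow> \<rho> (tadd xs ys) = \<rho> xs + \<rho> ys"
  using rX unfolding is_rX_def Let_def by blast
lemma rho_mult: "Xmem k v 0 xs \<Longrightarrow> Xmem k v 0 ys \<Longrightarrow> \<rho> (tmul xs ys) = (\<rho> xs * \<rho> ys) mod Xn1 n"
  using rX unfolding is_rX_def Let_def by blast
lemma rho_scal: "c \<in> k \<Longrightarrow> c \<in> mpow v 0 \<Longrightarrow> Xmem k v 0 xs \<Longrightarrow> \<rho> (tscal c xs) = smult (r c) (\<rho> xs)"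
  using rX unfolding is_rX_def Let_def by blast
lemma rho_one: "\<rho> [(1, 1)] = 1"
  using rX unfolding is_rX_def Let_def by blast
lemma rho_X: "\<rho> [(\<pi>, inverse \<pi>)] = [:0, 1:] mod Xn1 n"
  using rX unfolding is_rX_def Let_def by blast

lemma rho_nil: "\<rho> [] = 0"
proof -
  have "\<rho> [] = \<rho> [] + \<rho> []" using rho_add[OF Xmem_nil Xmem_nil] by (simp add: tadd_def)
  then show ?thesis by (simp only: add_cancel_right_right)
qed

lemma rho_pow: "\<rho> [(\<pi> ^ j, inverse \<pi> ^ j)] = monom 1 j mod Xn1 n"
proof (induction j)
  case 0
  have "degree (Xn1 n :: 'b poly) = n" by (rule degree_Xn1[OF n_pos])
  then have "degree (1 :: 'b poly) < degree (Xn1 n :: 'b poly)" using n_pos by simp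
  then show ?case using rho_one by (simp add: mod_poly_less monom_0 one_pCons)
next
  case (Suc j)
  have g1: "Xmem k v 0 [(\<pi> ^ j, inverse \<pi> ^ j)]"
    by (rule Xmem_good) (auto intro!: exI[of _ "int j"] simp: mpow_def v_power pi0 v_inverse power_inverse vpi)
  have g2: "Xmem k v 0 [(\<pi>, inverse \<pi>)]"
    by (rule Xmem_good) (auto intro!: exI[of _ 1] simp: mpow_def pi0 v_inverse vpi)
  have "tmul [(\<pi> ^ j, inverse \<pi> ^ j)] [(\<pi>, inverse \<pi>)] = [(\<pi> ^ Suc j, inverse \<pi> ^ Suc j)]"
    by (simp add: tmul_def power_Suc2)
  then have "\<rho> [(\<pi> ^ Suc j, inverse \<pi> ^ Suc j)] = ((monom 1 j mod Xn1 n) * ([:0, 1:] mod Xn1 n)) mod Xn1 n"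
    using rho_mult[OF g1 g2] Suc rho_X by simp
  also have "\<dots> = (monom 1 j * [:0, 1:]) mod Xn1 n" by (rule mod_mult_eq)
  also have "\<dots> = monom 1 (Suc j) mod Xn1 n" by (simp add: X_eq_monom mult_monom)
  finally show ?case .
qed

lemma rho_pow_lt: assumes "j < n" shows "\<rho> [(\<pi> ^ j, inverse \<pi> ^ j)] = monom 1 j"
proof -
  have "degree (Xn1 n :: 'b poly) = n" by (rule degree_Xn1[OF n_pos])
  then have "degree (monom (1::'b) j) < degree (Xn1 n :: 'b poly)" using assms by (simp add: degree_monom_eq)
  then have "monom (1::'b) j mod Xn1 n = monom 1 j" by (rule mod_poly_less)
  then show ?thesis using rho_pow[of j] by simp
qed

end


lemma arith_gap:
  fixes nn j j' w :: int
  assumes "0 < nn" "0 \<le> j" "j < nn" "0 \<le> j'" "j' < nn" "j' \<noteq> j" "j' - j \<le> nn * w"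
  shows "1 \<le> nn * w + j - j'"
proof (cases "w \<le> -1")
  case True
  then have "nn * w \<le> nn * (-1)" using assms(1) by (intro mult_left_mono) auto
  then show ?thesis using assms by simp
next
  case False
  show ?thesis
  proof (cases "w = 0")
    case True then show ?thesis using assms by simp
  next
    case False
    then have "1 \<le> w" using \<open>\<not> w \<le> -1\<close> by simp
    then have "nn * 1 \<le> nn * w" using assms(1) by (intro mult_left_mono) auto
    then show ?thesis using assms by linarith
  qed
qed

context msetup begin

lemma powi_mpow: "\<pi> powi m \<in> mpow v m"
  using pi0 by (simp add: mpow_def v_powi vpi)

lemma div_pi_mpow: "x \<in> mpow v (int j) \<Longrightarrow> x / \<pi> ^ j \<in> mpow v 0"
proof -
  assume x: "x \<in> mpow v (int j)"
  have "x / \<pi> ^ j = x * \<pi> powi (- int j)" by (simp add: power_int_minus divide_inverse)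
  moreover have "x * \<pi> powi (- int j) \<in> mpow v (int j + - int j)" using mpow_mult[OF x powi_mpow] .
  ultimately show ?thesis by simp
qed

definition cf :: "(('a \<Rightarrow> 'a) \<Rightarrow> 'a) \<Rightarrow> int \<Rightarrow> nat \<Rightarrow> 'a" where
  "cf f l j = act k f (\<pi> powi (int j - l)) / \<pi> ^ j"

lemma p_map_cf: "p_map k v \<pi> r l f = smult (inverse (r cp)) (\<Sum>j<n. monom (r (cf f l j)) j)"
  by (simp add: p_map_def cf_def)

lemma p_map_add:
  assumes "\<forall>j. cf f l j \<in> mpow v 0" "\<forall>j. cf g l j \<in> mpow v 0" "\<forall>x. act k h x = act k f x + act k g x"
  shows "p_map k v \<pi> r l h = p_map k v \<pi> r l f + p_map k v \<pi> r l g"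
proof -
  have "cf h l j = cf f l j + cf g l j" for j unfolding cf_def using assms(3) by (simp add: add_divide_distrib)
  then have "r (cf h l j) = r (cf f l j) + r (cf g l j)" for j using assms r_add by simp
  then show ?thesis unfolding p_map_cf by (simp add: add_monom[symmetric] sum.distrib smult_add_right)
qed

definition good :: "int \<Rightarrow> ('a \<times> 'a) list \<Rightarrow> bool" where
  "good i ys \<longleftrightarrow> (\<forall>(a, b)\<in>set ys. \<exists>J. a \<in> mpow v J \<and> b \<in> mpow v (i - J))"

lemma cf_single_O: assumes "a \<in> mpow v J" "b \<in> mpow v (i - J)"
  shows "cf (phi [(a, b)]) (d + i) j \<in> mpow v 0"
proof -
  have "b * \<pi> powi (int j - (d + i)) \<in> mpow v (i - J + (int j - (d + i)))"
    using mpow_mult[OF assms(2) powi_mpow] .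
  then have "Tr k (b * \<pi> powi (int j - (d + i))) \<in> mpow v (i - J + (int j - (d + i)) + d)"
    by (rule Tr_bound)
  then have "a * Tr k (b * \<pi> powi (int j - (d + i))) \<in> mpow v (J + (i - J + (int j - (d + i)) + d))"
    using mpow_mult[OF assms(1)] by blast
  then have "a * Tr k (b * \<pi> powi (int j - (d + i))) \<in> mpow v (int j)" by simp
  then show ?thesis unfolding cf_def act_single by (rule div_pi_mpow)
qed

lemma cf_nil: "cf (phi []) l j = 0" unfolding cf_def act_nil by simp

lemma p_map_nil: "p_map k v \<pi> r l (phi []) = 0"
  unfolding p_map_cf cf_nil by simp

lemma p_map_list: "good i ys \<Longrightarrow> (\<forall>j. cf (phi ys) (d + i) j \<in> mpow v 0) \<and>
    p_map k v \<pi> r (d + i) (phi ys) = (\<Sum>y\<leftarrow>ys. p_map k v \<pi> r (d + i) (phi [y]))"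
proof (induction ys)
  case Nil then show ?case by (simp add: cf_nil p_map_nil)
next
  case (Cons y ys)
  obtain a b where y: "y = (a, b)" by fastforce
  obtain J where J: "a \<in> mpow v J" "b \<in> mpow v (i - J)" using Cons.prems y unfolding good_def by auto
  have g: "good i ys" using Cons.prems unfolding good_def by auto
  have c1: "\<forall>j. cf (phi [y]) (d + i) j \<in> mpow v 0" using cf_single_O[OF J] y by simp
  have c2: "\<forall>j. cf (phi ys) (d + i) j \<in> mpow v 0" using Cons.IH g by simp
  have "cf (phi (y # ys)) (d + i) j = cf (phi [y]) (d + i) j + cf (phi ys) (d + i) j" for j
    unfolding cf_def act_cons[of k y ys] by (simp add: add_divide_distrib)
  then have A1: "\<forall>j. cf (phi (y # ys)) (d + i) j \<in> mpow v 0" using c1 c2 mpow_add by simp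
  have pm: "p_map k v \<pi> r (d + i) (phi (y # ys)) = p_map k v \<pi> r (d + i) (phi [y]) + p_map k v \<pi> r (d + i) (phi ys)"
    by (rule p_map_add[OF c1 c2]) (simp only: act_cons[of k y ys] simp_thms)
  have ih: "p_map k v \<pi> r (d + i) (phi ys) = (\<Sum>y\<leftarrow>ys. p_map k v \<pi> r (d + i) (phi [y]))"
    using Cons.IH g by blast
  show ?case using A1 unfolding pm ih by simp
qed

lemma rho_list: "good 0 zs \<Longrightarrow> \<rho> zs = (\<Sum>z\<leftarrow>zs. \<rho> [z])"
proof (induction zs)
  case Nil then show ?case by (simp add: rho_nil)
next
  case (Cons z zs)
  have g: "good 0 zs" using Cons.prems unfolding good_def by auto
  have x1: "Xmem k v 0 [z]" using Cons.prems unfolding good_def by (intro Xmem_good) auto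
  have x2: "Xmem k v 0 zs" using g unfolding good_def by (intro Xmem_good) auto
  have "\<rho> (z # zs) = \<rho> [z] + \<rho> zs" using rho_add[OF x1 x2] by (simp add: tadd_def)
  then show ?case using Cons.IH g by simp
qed

lemma shift: "p_map k v \<pi> r (d + i) (phi [(a, b)]) = p_map k v \<pi> r d (phi [(a, b * \<pi> powi (- i))])"
proof -
  have h: "b * \<pi> powi (- i) * \<pi> powi (int j - d) = b * \<pi> powi (int j - (d + i))" for j
  proof -
    have e: "int j - (d + i) = - i + (int j - d)" by simp
    have "\<pi> powi (int j - (d + i)) = \<pi> powi (- i) * \<pi> powi (int j - d)"
      unfolding e by (rule power_int_add) (simp add: pi0)
    then show ?thesis by (simp only: mult.assoc)
  qed
  show ?thesis unfolding p_map_def act_single h by (rule refl)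
qed

end


context msetup begin

lemma r_cp_nz: "r cp \<noteq> 0"
  using r_zero_iff[OF cp_O] cp_unit by simp

lemma core:
  assumes aJ: "a \<in> mpow v J" and bJ: "b \<in> mpow v (- J)"
  shows "\<rho> [(a, b)] = p_map k v \<pi> r d (phi [(a, b)])"
proof (cases "a = 0 \<or> b = 0")
  case True
  have x0: "Xmem k v 0 [(a, b)]" using aJ bJ by (intro Xmem_good) auto
  have x1: "Xmem k v 1 (tadd [(a, b)] (tneg []))"
  proof -
    have "\<exists>j. a \<in> mpow v j \<and> b \<in> mpow v (1 - j)"
    proof (cases "a = 0")
      case True then show ?thesis by (intro exI[of _ "1 - v b"]) (simp add: mpow_self)
    next
      case False then have "b = 0" using \<open>a = 0 \<or> b = 0\<close> by simp
      then show ?thesis by (intro exI[of _ "v a"]) (simp add: mpow_self)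
    qed
    then show ?thesis unfolding tadd_def tneg_def by (intro Xmem_good) auto
  qed
  have "\<rho> [(a, b)] = 0" using rho_eq[OF x0 Xmem_nil] x1 rho_nil by simp
  moreover have "cf (phi [(a, b)]) d j = 0" for j unfolding cf_def act_single using True by auto
  ultimately show ?thesis unfolding p_map_cf by simp
next
  case False
  then have a0: "a \<noteq> 0" and b0: "b \<noteq> 0" by auto
  define s where "s = v a"
  have vb: "- s \<le> v b" using aJ bJ a0 b0 by (simp add: s_def mpow_def)
  define j where "j = nat (s mod int n)"
  define q where "q = s div int n"
  have npos: "0 < int n" using n_pos by simp
  have sj: "s = int n * q + int j" unfolding j_def q_def using npos by simp
  have jn: "j < n" unfolding j_def using pos_mod_bound[OF npos, of s] pos_mod_sign[OF npos, of s]
    by (simp add: nat_less_iff)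
  obtain u where u: "u \<in> k" "u \<noteq> 0" "v u = int n * q" using vk_ex by blast
  define A where "A = \<pi> ^ j"
  define B where "B = inverse \<pi> ^ j"
  have A0: "A \<noteq> 0" unfolding A_def using pi0 by simp
  have vA: "v A = int j" unfolding A_def using pi0 by (simp add: v_power vpi)
  have AB: "B = inverse A" unfolding A_def B_def by (simp add: power_inverse)
  define e where "e = a / (u * A)"
  define e' where "e' = b * u * A"
  have ve: "v e = 0" unfolding e_def using a0 u A0 vA sj by (simp add: v_divide v_mult s_def)
  have eO: "e \<in> mpow v 0" using ve by (simp add: mpow_def)
  have ve': "0 \<le> v e'" unfolding e'_def using b0 u A0 vA sj vb by (simp add: v_mult)
  have e'O: "e' \<in> mpow v 0" using ve' by (simp add: mpow_def)
  obtain c where c: "c \<in> k" "c \<in> mpow v 0" "e - c \<in> mpow v 1" using residue_k[OF eO] by blast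
  obtain c' where c': "c' \<in> k" "c' \<in> mpow v 0" "e' - c' \<in> mpow v 1" using residue_k[OF e'O] by blast
  have ha: "a = u * (A * e)" unfolding e_def using u A0 by simp
  have hb: "b = inverse u * (B * e')" unfolding e'_def AB using u A0 by (simp add: field_simps)
  have ccO: "c * c' \<in> mpow v 0" using mpow_mult[OF c(2) c'(2)] by simp
  have cck: "c * c' \<in> k" using c c' kp(4) by blast
  have AO: "A \<in> mpow v (int j)" using vA by (simp add: mpow_def)
  have BO: "B \<in> mpow v (- int j)" using vA A0 AB by (simp add: mpow_def v_inverse)
  have x0a: "Xmem k v 0 [(a, b)]" using aJ bJ by (intro Xmem_good) auto
  have x0c: "Xmem k v 0 [(c * c' * A, B)]"
  proof (rule Xmem_good)
    have "c * c' * A \<in> mpow v (0 + int j)" using mpow_mult[OF ccO AO] .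
    then show "\<forall>(x, y)\<in>set [(c * c' * A, B)]. \<exists>J. x \<in> mpow v J \<and> y \<in> mpow v (0 - J)"
      using BO by auto
  qed
  have x0AB: "Xmem k v 0 [(A, B)]" using AO BO by (intro Xmem_good) auto
  have xd: "Xmem k v 1 (tadd [(a, b)] (tneg [(c * c' * A, B)]))"
  proof (rule Xmem_teq)
    let ?W = "[(A * (e - c), B * e'), (c * A, B * (e' - c'))]"
    show "Xmem k v 1 ?W"
    proof (rule Xmem_good)
      have h1: "A * (e - c) \<in> mpow v (int j + 1)" using mpow_mult[OF AO c(3)] .
      have h2: "B * e' \<in> mpow v (- int j + 0)" using mpow_mult[OF BO e'O] .
      have h3: "c * A \<in> mpow v (0 + int j)" using mpow_mult[OF c(2) AO] .
      have h4: "B * (e' - c') \<in> mpow v (- int j + 1)" using mpow_mult[OF BO c'(3)] .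
      have w1: "\<exists>J. A * (e - c) \<in> mpow v J \<and> B * e' \<in> mpow v (1 - J)"
        by (rule exI[of _ "int j + 1"]) (use h1 h2 in simp)
      have w2: "\<exists>J. c * A \<in> mpow v J \<and> B * (e' - c') \<in> mpow v (1 - J)"
        by (rule exI[of _ "int j"]) (use h3 h4 in simp)
      show "\<forall>(x, y)\<in>set ?W. \<exists>J. x \<in> mpow v J \<and> y \<in> mpow v (1 - J)"
        using w1 w2 by simp
    qed
    show "teq k (tadd [(a, b)] (tneg [(c * c' * A, B)])) ?W"
      unfolding teq_def
    proof (intro allI impI)
      fix f g assume f: "klin k f" and g: "klin k g"
      have F1: "f a * g b = f (A * e) * g (B * e')"
        unfolding ha hb using klin_scal[OF f u(1)] klin_scal[OF g kp(6)[OF u(1)]] u(2) by simp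
      have F2: "f (- (c * c' * A)) = - (c * c' * f A)"
        using klin_minus[OF f] klin_scal[OF f cck] by (simp add: mult.assoc)
      have F3: "f (A * (e - c)) = f (A * e) - c * f A"
        using klin_diff[OF f, of "A * e" "c * A"] klin_scal[OF f c(1)] by (simp add: right_diff_distrib mult.commute)
      have F4: "g (B * (e' - c')) = g (B * e') - c' * g B"
        using klin_diff[OF g, of "B * e'" "c' * B"] klin_scal[OF g c'(1)] by (simp add: right_diff_distrib mult.commute)
      have F5: "f (c * A) = c * f A" using klin_scal[OF f c(1)] .
      have s1: "(\<Sum>(x, y)\<leftarrow>tadd [(a, b)] (tneg [(c * c' * A, B)]). f x * g y)
          = f a * g b + f (- (c * c' * A)) * g B" unfolding tadd_def tneg_def by simp
      have s2: "(\<Sum>(x, y)\<leftarrow>?W. f x * g y) = f (A * (e - c)) * g (B * e') + f (c * A) * g (B * (e' - c'))"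
        by simp
      show "(\<Sum>(x, y)\<leftarrow>tadd [(a, b)] (tneg [(c * c' * A, B)]). f x * g y) =
                       (\<Sum>(x, y)\<leftarrow>?W. f x * g y)"
        unfolding s1 s2 F1 F2 F3 F4 F5 by (simp add: algebra_simps)
    qed
  qed
  have "\<rho> [(a, b)] = \<rho> [(c * c' * A, B)]" using rho_eq[OF x0a x0c] xd by simp
  also have "[(c * c' * A, B)] = tscal (c * c') [(A, B)]" by (simp add: tscal_def)
  also have "\<rho> (tscal (c * c') [(A, B)]) = smult (r (c * c')) (\<rho> [(A, B)])"
    by (rule rho_scal[OF cck ccO x0AB])
  also have "\<rho> [(A, B)] = monom 1 j" unfolding A_def B_def by (rule rho_pow_lt[OF jn])
  finally have rho_side: "\<rho> [(a, b)] = monom (r c * r c') j"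
    using c(2) c'(2) by (simp add: smult_monom r_mult)
  define P where "P = \<pi> powi (- d)"
  have cf_other: "r (cf (phi [(a, b)]) d j') = 0" if j': "j' < n" "j' \<noteq> j" for j'
  proof -
    define T where "T = Tr k (b * \<pi> powi (int j' - d))"
    have "b * \<pi> powi (int j' - d) \<in> mpow v (- s + (int j' - d))"
    proof -
      have bs: "b \<in> mpow v (- s)" using vb by (simp add: mpow_def)
      show ?thesis using mpow_mult[OF bs powi_mpow] .
    qed
    then have TO: "T \<in> mpow v (- s + (int j' - d) + d)" unfolding T_def by (rule Tr_bound)
    have cfe: "cf (phi [(a, b)]) d j' = a * T / \<pi> ^ j'" unfolding cf_def act_single T_def by simp
    have "cf (phi [(a, b)]) d j' \<in> mpow v 1"
    proof (cases "T = 0")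
      case True then show ?thesis using cfe by simp
    next
      case False
      obtain m where m: "v T = int n * m" using vk_val[OF _ False] Tr_in_k T_def by blast
      have "- s + int j' \<le> v T" using TO False by (simp add: mpow_def)
      then have "int j' - int j \<le> int n * (q + m)" using sj m by (simp add: algebra_simps)
      then have "1 \<le> int n * (q + m) + int j - int j'"
        using arith_gap[of "int n" "int j" "int j'" "q + m"] npos jn j' by simp
      moreover have "v (a * T / \<pi> ^ j') = int n * (q + m) + int j - int j'"
        using a0 False pi0 m sj by (simp add: v_divide v_mult v_power vpi s_def algebra_simps)
      ultimately show ?thesis using cfe by (simp add: mpow_def)
    qed
    then show ?thesis by (rule r_m1)
  qed
  have cf_main: "r (cf (phi [(a, b)]) d j) = r c * r c' * r cp"
  proof -
    have e1: "b * \<pi> powi (int j - d) = (e' * P) / u"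
    proof -
      have "\<pi> powi (int j + - d) = \<pi> powi (int j) * \<pi> powi (- d)"
        by (rule power_int_add) (simp add: pi0)
      then have "\<pi> powi (int j - d) = A * P" unfolding A_def P_def by simp
      then show ?thesis unfolding e'_def using u by simp
    qed
    have cfe: "cf (phi [(a, b)]) d j = e * Tr k (e' * P)"
      unfolding cf_def act_single e1 Tr_div[OF u(1)] unfolding e_def A_def[symmetric]
      using u A0 by (simp add: field_simps)
    have PO: "P \<in> mpow v (- d)" unfolding P_def by (rule powi_mpow)
    have t1: "Tr k (e' * P) = c' * cp + Tr k ((e' - c') * P)"
      unfolding c_pi_def P_def[symmetric] by (simp add: left_diff_distrib Tr_diff Tr_scal[OF c'(1)])
    have "(e' - c') * P \<in> mpow v (1 + - d)" using mpow_mult[OF c'(3) PO] .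
    then have t2: "Tr k ((e' - c') * P) \<in> mpow v 1" using Tr_bound by fastforce
    have t3: "c' * cp \<in> mpow v 0" using mpow_mult[OF c'(2) cp_O] by simp
    have t2': "Tr k ((e' - c') * P) \<in> mpow v 0" using t2 mpow_mono by fastforce
    have "e' * P \<in> mpow v (0 + - d)" using mpow_mult[OF e'O PO] .
    then have t4: "Tr k (e' * P) \<in> mpow v 0" using Tr_bound by fastforce
    have re: "r e = r c"
    proof -
      have "e = c + (e - c)" by simp
      then have "r e = r c + r (e - c)" using r_add[OF c(2), of "e - c"] c(3) mpow_mono by fastforce
      then show ?thesis using r_m1[OF c(3)] by simp
    qed
    have "r (Tr k (e' * P)) = r c' * r cp"
      unfolding t1 using r_add[OF t3 t2'] r_m1[OF t2] r_mult[OF c'(2) cp_O] by simp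
    then show ?thesis unfolding cfe using r_mult[OF eO t4] re by simp
  qed
  have sum_eq: "(\<Sum>j'<n. monom (r (cf (phi [(a, b)]) d j')) j') = monom (r c * r c' * r cp) j"
  proof -
    have "(\<Sum>j'<n. monom (r (cf (phi [(a, b)]) d j')) j')
        = monom (r (cf (phi [(a, b)]) d j)) j + (\<Sum>j'\<in>{..<n} - {j}. monom (r (cf (phi [(a, b)]) d j')) j')"
      using jn by (simp add: sum.remove)
    also have "(\<Sum>j'\<in>{..<n} - {j}. monom (r (cf (phi [(a, b)]) d j')) j') = 0"
      using cf_other by (intro sum.neutral) auto
    finally show ?thesis using cf_main by simp
  qed
  have "p_map k v \<pi> r d (phi [(a, b)]) = monom (r c * r c') j"
    unfolding p_map_cf sum_eq smult_monom using r_cp_nz by (simp add: field_simps)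
  then show ?thesis using rho_side by simp
qed

end


lemma phi_swap: assumes s: "\<sigma> \<in> Gal k" shows "phi (tswap \<alpha>) \<sigma> = \<sigma> (phi \<alpha> (inv \<sigma>))"
  unfolding phi_def tswap_def
  by (induction \<alpha>) (auto simp: Gal_add[OF s] Gal_mult[OF s] Gal_zero[OF s] Gal_inv_cancel1[OF s] mult.commute)

lemma sum_list_cong': "(\<And>y. y \<in> set ys \<Longrightarrow> F y = H y) \<Longrightarrow> (\<Sum>y\<leftarrow>ys. F y) = (\<Sum>y\<leftarrow>ys. H y)"
  by (induction ys) auto

context msetup begin

lemma part5:
  assumes "Xmem k v i \<alpha>"
  shows "Xmem k v 0 (tmul \<alpha> [(1, \<pi> powi (- i))]) \<and>
         \<rho> (tmul \<alpha> [(1, \<pi> powi (- i))]) = p_map k v \<pi> r (d + i) (phi \<alpha>)"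
proof -
  define P where "P = \<pi> powi (- i)"
  obtain ys where ys: "teq k \<alpha> ys" "good i ys" using assms unfolding Xmem_def good_def by blast
  define g where "g = (\<lambda>(a::'a, b::'a). (a * 1, b * P))"
  define zs where "zs = map g ys"
  have tm: "tmul \<alpha> [(1, P)] = map g \<alpha>" unfolding g_def by (rule tmul_single)
  have tq: "teq k (tmul \<alpha> [(1, P)]) zs" unfolding tm zs_def g_def by (rule teq_map_r[OF ys(1)])
  have gz: "good 0 zs"
    unfolding good_def zs_def g_def
  proof (clarsimp)
    fix a b assume ab: "(a, b) \<in> set ys"
    then obtain J where J: "a \<in> mpow v J" "b \<in> mpow v (i - J)" using ys(2) unfolding good_def by blast
    have "b * P \<in> mpow v (i - J + - i)" unfolding P_def using mpow_mult[OF J(2) powi_mpow] .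
    then show "\<exists>J. a \<in> mpow v J \<and> b * P \<in> mpow v (- J)" using J(1) by (intro exI[of _ J]) simp
  qed
  have xz: "Xmem k v 0 zs" using gz unfolding good_def by (intro Xmem_good) auto
  have x0: "Xmem k v 0 (tmul \<alpha> [(1, P)])" using Xmem_teq[OF tq xz] .
  have "\<rho> (tmul \<alpha> [(1, P)]) = \<rho> zs" using rho_eq[OF x0 xz] teq_diff_X[OF tq] by simp
  also have "\<dots> = (\<Sum>z\<leftarrow>zs. \<rho> [z])" by (rule rho_list[OF gz])
  also have "\<dots> = (\<Sum>y\<leftarrow>ys. \<rho> [g y])" unfolding zs_def by (simp add: o_def)
  also have "\<dots> = (\<Sum>y\<leftarrow>ys. p_map k v \<pi> r (d + i) (phi [y]))"
  proof (rule sum_list_cong')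
    fix y assume y: "y \<in> set ys"
    obtain a b where ab: "y = (a, b)" by fastforce
    obtain J where J: "a \<in> mpow v J" "b \<in> mpow v (i - J)" using ys(2) y ab unfolding good_def by blast
    have bP: "b * P \<in> mpow v (- J)" unfolding P_def using mpow_mult[OF J(2) powi_mpow[of "- i"]] by simp
    have "\<rho> [g y] = \<rho> [(a, b * P)]" unfolding g_def ab by simp
    also have "\<dots> = p_map k v \<pi> r d (phi [(a, b * P)])" by (rule core[OF J(1) bP])
    also have "\<dots> = p_map k v \<pi> r (d + i) (phi [y])" unfolding ab P_def by (rule shift[symmetric])
    finally show "\<rho> [g y] = p_map k v \<pi> r (d + i) (phi [y])" .
  qed
  also have "\<dots> = p_map k v \<pi> r (d + i) (phi ys)" using p_map_list[OF ys(2)] by simp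
  also have "\<dots> = p_map k v \<pi> r (d + i) (phi \<alpha>)" unfolding p_map_def using teq_act[OF ys(1)] by simp
  finally show ?thesis using x0 unfolding P_def by simp
qed

end

lemma pi_nonzero:
  fixes k :: "'a::field set" and \<rho> :: "('a \<times> 'a) list \<Rightarrow> 'b::field poly"
  assumes rX: "is_rX k v \<pi> r \<rho>"
  shows "\<pi> \<noteq> 0"
proof
  assume p0: "\<pi> = 0"
  let ?n = "card (Gal k)"
  have xn: "Xmem k v 0 []" by (rule Xmem_nil)
  have x00: "Xmem k v 0 [(0, 0)]" by (rule Xmem_good) (auto simp: mpow_def)
  have rn: "\<rho> [] = 0"
  proof -
    have "\<rho> (tadd [] []) = \<rho> [] + \<rho> []" using rX xn unfolding is_rX_def Let_def by blast
    then have "\<rho> [] = \<rho> [] + \<rho> []" by (simp add: tadd_def)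
    then show ?thesis by (simp only: add_cancel_right_right)
  qed
  have "Xmem k v 1 (tadd [(0, 0)] (tneg []))" unfolding tadd_def tneg_def by (rule Xmem_good) (auto simp: mpow_def)
  then have "\<rho> [(0, 0)] = \<rho> []" using rX x00 xn unfolding is_rX_def Let_def by blast
  moreover have "\<rho> [(\<pi>, inverse \<pi>)] = [:0, 1:] mod Xn1 ?n" using rX unfolding is_rX_def Let_def by blast
  ultimately have "[:0, 1:] mod Xn1 ?n = (0 :: 'b poly)" using p0 rn by simp
  then have "Xn1 ?n dvd ([:0, 1:] :: 'b poly)" by (simp add: dvd_eq_mod_eq_0)
  then obtain h where "([:0, 1:] :: 'b poly) = Xn1 ?n * h" by (rule dvdE)
  then have "poly ([:0, 1:] :: 'b poly) 1 = poly (Xn1 ?n) 1 * poly h 1" by simp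
  moreover have "poly (Xn1 ?n :: 'b poly) 1 = 0" by (simp add: Xn1_def poly_monom)
  ultimately show False by simp
qed

theorem theorem2p2p2:
  fixes k :: "'a::field set" and v :: "'a \<Rightarrow> int" and \<pi> :: 'a
    and r :: "'a \<Rightarrow> 'b::field" and \<rho> :: "('a \<times> 'a) list \<Rightarrow> 'b poly" and i :: int
  assumes "is_subfield k"
    and "discrete_val v"
    and "v_complete v UNIV" and "v_complete v k"
    and "finite_galois k"
    and "v ` (k - {0}) = range (\<lambda>z. int (card (Gal k)) * z)"
    and "v \<pi> = 1"
    and "residue_map v r"
    and "is_rX k v \<pi> r \<rho>"
  shows "(\<forall>\<alpha>. Xmem k v i \<alpha> \<longrightarrow>
            Xmem k v 0 (tmul \<alpha> [(1, \<pi> powi (- i))]) \<and>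
            \<rho> (tmul \<alpha> [(1, \<pi> powi (- i))]) = p_map k v \<pi> r (depth k v + i) (phi \<alpha>))
       \<and> (\<forall>\<alpha>. \<forall>\<sigma>\<in>Gal k. phi (tswap \<alpha>) \<sigma> = \<sigma> (phi \<alpha> (inv \<sigma>)))"
proof -
  have p0: "\<pi> \<noteq> 0" using pi_nonzero[OF assms(9)] .
  interpret msetup v k \<pi> r \<rho>
    by (unfold_locales) (use assms p0 in auto)
  show ?thesis using part5 phi_swap by blast
qed


end
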